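(* Consider $N$ agents running the DOGD-GT algorithm with constant step size $\eta$ for $T$ iterations, as described in the context. Suppose Assumptions 1 and 2 hold: <ul> <li>(Assumption 1) each $f_{t,i}$ is convex and $L$-smooth, and there is $D$ with $\mathbb{E}[\|\nabla f_{t,i}(x)\|^2]\le D$;</li> <li>(Assumption 2) with $F(x)=\mathbb{E}[f_{t,i}(x)]$, there is $\sigma\ge0$ with $\mathbb{E}[\|\nabla f_{t,i}(x)-\nabla F(x)\|^2]\le\sigma^2$.</li> </ul> Let $\rho$ be the spectral norm of $W-\frac1N\mathbf{1}\mathbf{1}^T$. If \[ \eta\le\min\Big\{\frac{(1-\rho^2)^{1.5}}{32L\sqrt{1+\rho^2}},\ \frac1{2L}\sqrt{\frac NT}\Big\} \] and $N=o(T^{1/3})$, then the average regret satisfies \[ \mathbb{E}[\mathbf{R}]=O\Big(\eta^2T+\frac{\eta T}{N}+\frac1\eta\Big)=O\Big(\sqrt{\frac TN}\Big). \]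
   Context: Graph and weights: agents $\{1,\dots,N\}$ communicate over an undirected connected graph. The matrix $W=[w_{ij}]$ is doubly stochastic, with $w_{ij}>0$ if $(i,j)$ is an edge, $w_{ii}>0$, and $w_{ij}=0$ otherwise; $\rho\in(0,1)$. Losses: at iteration $t$, agent $i$ incurs a random convex loss $f_{t,i}$, where all $f_{t,i}$ follow a common unknown distribution $\mathcal{P}$. DOGD-GT with step size $\eta$: <ul> <li>$x_{1,i}=0$ and $s_{1,i}=\nabla f_{1,i}(x_{1,i})$;</li> <li>for $t\ge2$, $s_{t,i}=\sum_j w_{ij}s_{t-1,j}+\nabla f_{t,i}(x_{t,i})-\nabla f_{t-1,i}(x_{t-1,i})$;</li> <li>$x_{t+1,i}=\sum_j w_{ij}x_{t,j}-\eta s_{t,i}$.</li> </ul> Each iteration uses one communication step with neighbors. Regret: with $x^*=\arg\min_x\mathbb{E}_{f\sim\mathcal{P}}[f(x)]$, the average regret per agent is \[ \mathbf{R}=\frac1N\Big[\sum_{i=1}^N\sum_{t=1}^T f_{t,i}(x_{t,i})-\sum_{i=1}^N\sum_{t=1}^T f_{t,i}(x^* )\Big]. \] *)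

theory Defs
  imports "HOL-Probability.Probability" "HOL-Library.Landau_Symbols"
begin

text \<open>Agents are indexed by 0,...,N-1; iterations by t = 1,2,...
  The random loss of agent i at time t is \<open>loss (\<xi> t i \<omega>)\<close>, where the data
  \<open>\<xi> t i\<close> are i.i.d. with distribution P. \<open>G t i y\<close> denotes the gradient of
  f_{t,i} at y.  \<open>dogd G W N \<eta> k\<close> is the pair (x_{k+1}, s_{k+1}).\<close>

primrec dogd :: "(nat \<Rightarrow> nat \<Rightarrow> 'a \<Rightarrow> 'a::real_vector) \<Rightarrow> (nat \<Rightarrow> nat \<Rightarrow> real) \<Rightarrow> nat \<Rightarrow> real
    \<Rightarrow> nat \<Rightarrow> (nat \<Rightarrow> 'a) \<times> (nat \<Rightarrow> 'a)" where
  "dogd G W N \<eta> 0 = ((\<lambda>i. 0), (\<lambda>i. G 1 i 0))"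
| "dogd G W N \<eta> (Suc k) =
     (let x = fst (dogd G W N \<eta> k); s = snd (dogd G W N \<eta> k);
          x' = (\<lambda>i. (\<Sum>j<N. W i j *\<^sub>R x j) - \<eta> *\<^sub>R s i)
      in (x', (\<lambda>i. (\<Sum>j<N. W i j *\<^sub>R s j) + G (k + 2) i (x' i) - G (k + 1) i (x i))))"

definition dogd_x :: "(nat \<Rightarrow> nat \<Rightarrow> 'a \<Rightarrow> 'a::real_vector) \<Rightarrow> (nat \<Rightarrow> nat \<Rightarrow> real) \<Rightarrow> nat \<Rightarrow> real
    \<Rightarrow> nat \<Rightarrow> nat \<Rightarrow> 'a" where
  "dogd_x G W N \<eta> t i = fst (dogd G W N \<eta> (t - 1)) i"

definition regret :: "('b \<Rightarrow> 'a::real_vector \<Rightarrow> real) \<Rightarrow> ('b \<Rightarrow> 'a \<Rightarrow> 'a) \<Rightarrow> (nat \<Rightarrow> nat \<Rightarrow> 'w \<Rightarrow> 'b)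
    \<Rightarrow> 'a \<Rightarrow> (nat \<Rightarrow> nat \<Rightarrow> real) \<Rightarrow> nat \<Rightarrow> real \<Rightarrow> nat \<Rightarrow> 'w \<Rightarrow> real" where
  "regret loss g \<xi> xs W N \<eta> T \<omega> =
     (1 / real N) * ((\<Sum>i<N. \<Sum>t\<in>{1..T}.
         loss (\<xi> t i \<omega>) (dogd_x (\<lambda>t i y. g (\<xi> t i \<omega>) y) W N \<eta> t i))
       - (\<Sum>i<N. \<Sum>t\<in>{1..T}. loss (\<xi> t i \<omega>) xs))"

definition expected_regret :: "'w measure \<Rightarrow> ('b \<Rightarrow> 'a::real_vector \<Rightarrow> real) \<Rightarrow> ('b \<Rightarrow> 'a \<Rightarrow> 'a)
    \<Rightarrow> (nat \<Rightarrow> nat \<Rightarrow> 'w \<Rightarrow> 'b) \<Rightarrow> 'a \<Rightarrow> (nat \<Rightarrow> nat \<Rightarrow> real) \<Rightarrow> nat \<Rightarrow> real \<Rightarrow> nat \<Rightarrow> real" where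
  "expected_regret M loss g \<xi> xs W N \<eta> T = (\<integral>\<omega>. regret loss g \<xi> xs W N \<eta> T \<omega> \<partial>M)"

definition gossip_matrix :: "nat \<Rightarrow> (nat \<Rightarrow> nat \<Rightarrow> real) \<Rightarrow> bool" where
  "gossip_matrix N W \<longleftrightarrow>
     (\<forall>i<N. (\<Sum>j<N. W i j) = 1) \<and> (\<forall>j<N. (\<Sum>i<N. W i j) = 1) \<and>
     (\<forall>i<N. W i i > 0) \<and>
     (\<exists>E. E \<subseteq> {..<N} \<times> {..<N} \<and> sym E \<and> (\<forall>i. (i, i) \<notin> E) \<and>
          (\<forall>i<N. \<forall>j<N. (i, j) \<in> E\<^sup>*) \<and>
          (\<forall>i<N. \<forall>j<N. i \<noteq> j \<longrightarrow> ((i, j) \<in> E \<longrightarrow> W i j > 0) \<and> ((i, j) \<notin> E \<longrightarrow> W i j = 0)))"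

definition spec_norm :: "nat \<Rightarrow> (nat \<Rightarrow> nat \<Rightarrow> real) \<Rightarrow> real" where
  "spec_norm N A = Sup {sqrt (\<Sum>i<N. (\<Sum>j<N. A i j * v j)\<^sup>2) | v. (\<Sum>j<N. (v j)\<^sup>2) = 1}"

definition eta_max :: "real \<Rightarrow> real \<Rightarrow> nat \<Rightarrow> nat \<Rightarrow> real" where
  "eta_max L \<rho> N T = min ((1 - \<rho>\<^sup>2) powr 1.5 / (32 * L * sqrt (1 + \<rho>\<^sup>2)))
                          (1 / (2 * L) * sqrt (real N / real T))"

end

theory Submission
  imports Defs
begin


definition rnd :: "nat \<Rightarrow> 'a::euclidean_space \<Rightarrow> 'a" where
  "rnd n x = (\<Sum>b\<in>Basis. (of_int \<lfloor>real (Suc n) * (x \<bullet> b)\<rfloor> / real (Suc n)) *\<^sub>R b)"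

lemma rnd_measurable: "rnd n \<in> borel_measurable borel"
  unfolding rnd_def by measurable

lemma rnd_countable: "countable (range (rnd n :: 'a::euclidean_space \<Rightarrow> 'a))"
proof -
  have "range (rnd n :: 'a \<Rightarrow> 'a) \<subseteq>
    (\<lambda>q. \<Sum>b\<in>Basis. (of_int (q b) / real (Suc n)) *\<^sub>R b) ` (PiE (Basis::'a set) (\<lambda>_. UNIV :: int set))"
  proof
    fix v assume "v \<in> range (rnd n :: 'a \<Rightarrow> 'a)"
    then obtain x where v: "v = rnd n x" by auto
    let ?q = "restrict (\<lambda>b. \<lfloor>real (Suc n) * (x \<bullet> b)\<rfloor>) (Basis::'a set)"
    have "v = (\<lambda>q. \<Sum>b\<in>Basis. (of_int (q b) / real (Suc n)) *\<^sub>R b) ?q"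
      unfolding v rnd_def by (intro sum.cong) auto
    moreover have "?q \<in> PiE Basis (\<lambda>_. UNIV)" by auto
    ultimately show "v \<in> (\<lambda>q. \<Sum>b\<in>Basis. (of_int (q b) / real (Suc n)) *\<^sub>R b) ` (PiE Basis (\<lambda>_. UNIV :: int set))"
      by blast
  qed
  moreover have "countable (PiE (Basis::'a set) (\<lambda>_. UNIV :: int set))"
    by (intro countable_PiE) auto
  ultimately show ?thesis by (meson countable_image countable_subset)
qed

lemma rnd_close: "norm (rnd n x - x) \<le> real DIM('a) / real (Suc n)"
  for x :: "'a::euclidean_space"
proof -
  have "rnd n x - x = (\<Sum>b\<in>Basis. (of_int \<lfloor>real (Suc n) * (x \<bullet> b)\<rfloor> / real (Suc n) - x \<bullet> b) *\<^sub>R b)"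
    unfolding rnd_def by (subst (2) euclidean_representation[symmetric]) (simp add: sum_subtractf scaleR_diff_left)
  also have "norm \<dots> \<le> (\<Sum>b\<in>(Basis::'a set). norm ((of_int \<lfloor>real (Suc n) * (x \<bullet> b)\<rfloor> / real (Suc n) - x \<bullet> b) *\<^sub>R b))"
    by (rule norm_sum)
  also have "\<dots> \<le> (\<Sum>b\<in>(Basis::'a set). 1 / real (Suc n))"
  proof (rule sum_mono)
    fix b :: 'a assume b: "b \<in> Basis"
    define m where "m = real (Suc n)"
    have m: "m > 0" unfolding m_def by simp
    have f1: "of_int \<lfloor>m * (x \<bullet> b)\<rfloor> \<le> m * (x \<bullet> b)" by simp
    have f2: "m * (x \<bullet> b) < of_int \<lfloor>m * (x \<bullet> b)\<rfloor> + 1" by linarith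
    have a: "\<bar>of_int \<lfloor>m * (x \<bullet> b)\<rfloor> - m * (x \<bullet> b)\<bar> \<le> 1" using f1 f2 by linarith
    have "of_int \<lfloor>m * (x \<bullet> b)\<rfloor> / m - x \<bullet> b = (of_int \<lfloor>m * (x \<bullet> b)\<rfloor> - m * (x \<bullet> b)) / m"
      using m by (simp add: field_simps)
    then have "\<bar>of_int \<lfloor>m * (x \<bullet> b)\<rfloor> / m - x \<bullet> b\<bar> \<le> 1 / m"
      using a m by (simp add: abs_div_pos divide_right_mono)
    then show "norm ((of_int \<lfloor>real (Suc n) * (x \<bullet> b)\<rfloor> / real (Suc n) - x \<bullet> b) *\<^sub>R b) \<le> 1 / real (Suc n)"
      using b unfolding m_def by simp
  qed
  also have "\<dots> = real DIM('a) / real (Suc n)" by simp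
  finally show ?thesis .
qed

lemma rnd_tendsto: "(\<lambda>n. rnd n x) \<longlonglongrightarrow> (x::'a::euclidean_space)"
proof -
  have "(\<lambda>n. real DIM('a) / real (Suc n)) \<longlonglongrightarrow> 0"
    using LIMSEQ_Suc[OF lim_const_over_n[of "real DIM('a)"]] by simp
  then have "(\<lambda>n. norm (rnd n x - x)) \<longlonglongrightarrow> 0"
    by (rule Lim_null_comparison[rotated]) (rule always_eventually, use rnd_close[where 'a='a] in simp)
  then show ?thesis by (simp add: tendsto_norm_zero_iff LIM_zero_iff)
qed

lemma caratheodory_measurable:
  fixes h :: "'b \<Rightarrow> 'a::euclidean_space \<Rightarrow> 'c::metric_space"
  assumes cont: "\<And>z. continuous_on UNIV (h z)"
    and hm: "\<And>x. (\<lambda>z. h z x) \<in> measurable P borel"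
    and Z: "Z \<in> measurable Mx P" and X: "X \<in> borel_measurable Mx"
  shows "(\<lambda>w. h (Z w) (X w)) \<in> borel_measurable Mx"
proof (rule borel_measurable_LIMSEQ_metric)
  fix n
  have cnt: "countable (range (rnd n :: 'a \<Rightarrow> 'a))" by (rule rnd_countable)
  have "(\<lambda>w. rnd n (X w)) \<in> measurable Mx (count_space (range (rnd n)))"
  proof -
    have "(\<lambda>w. rnd n (X w)) \<in> borel_measurable Mx"
      using measurable_comp[OF X rnd_measurable] by (simp add: comp_def)
    then have "\<forall>v\<in>range (rnd n). (\<lambda>w. rnd n (X w)) -` {v} \<inter> space Mx \<in> sets Mx"
      by (auto intro: borel_measurable_vimage)
    then show ?thesis
      by (subst measurable_count_space_eq_countable[OF cnt]) auto
  qed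
  moreover have "\<And>a. a \<in> range (rnd n) \<Longrightarrow> (\<lambda>w. h (Z w) a) \<in> borel_measurable Mx"
    by (rule measurable_compose[OF Z hm])
  ultimately show "(\<lambda>w. h (Z w) (rnd n (X w))) \<in> borel_measurable Mx"
    using measurable_compose_countable'[where f="\<lambda>a w. h (Z w) a" and g="\<lambda>w. rnd n (X w)", OF _ _ cnt]
    by blast
next
  fix w
  have "isCont (h (Z w)) (X w)" using cont continuous_on_eq_continuous_at by blast
  then show "(\<lambda>n. h (Z w) (rnd n (X w))) \<longlonglongrightarrow> h (Z w) (X w)"
    by (rule isCont_tendsto_compose) (rule rnd_tendsto)
qed



lemma prod_indep_eq:
  fixes h :: "'b \<Rightarrow> 'c \<Rightarrow> real" and X :: "('i \<Rightarrow> 'b) \<Rightarrow> 'c"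
  assumes P: "prob_space P" and I: "finite I" "k \<in> I"
    and Xk: "\<And>y z. X (y(k:=z)) = X y"
    and H: "\<And>x. (\<integral>z. h z x \<partial>P) = H x"
    and int1: "integrable (PiM I (\<lambda>_. P)) (\<lambda>y. h (y k) (X y))"
    and int2: "integrable (PiM I (\<lambda>_. P)) (\<lambda>y. H (X y))"
  shows "(\<integral>y. h (y k) (X y) \<partial>PiM I (\<lambda>_. P)) = (\<integral>y. H (X y) \<partial>PiM I (\<lambda>_. P))"
proof -
  interpret PP: product_prob_space "\<lambda>_. P" I
    by (simp add: product_prob_space_def product_prob_space_axioms_def P
        product_sigma_finite_def prob_space_imp_sigma_finite)
  interpret prob_space P by (rule P)
  have II: "I = insert k (I - {k})" using I by auto
  have fin: "finite (I - {k})" "k \<notin> I - {k}" using I by auto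
  have "(\<integral>y. h (y k) (X y) \<partial>PiM I (\<lambda>_. P)) =
      (\<integral>x. (\<integral>z. h ((x(k:=z)) k) (X (x(k:=z))) \<partial>P) \<partial>PiM (I - {k}) (\<lambda>_. P))"
    using PP.product_integral_insert[OF fin, of "\<lambda>y. h (y k) (X y)"] int1 II by simp
  also have "\<dots> = (\<integral>x. H (X x) \<partial>PiM (I - {k}) (\<lambda>_. P))"
    by (simp add: Xk H)
  also have "\<dots> = (\<integral>x. (\<integral>z. H (X (x(k:=z))) \<partial>P) \<partial>PiM (I - {k}) (\<lambda>_. P))"
    by (simp add: Xk prob_space.prob_space[OF P])
  also have "\<dots> = (\<integral>y. H (X y) \<partial>PiM I (\<lambda>_. P))"
    using PP.product_integral_insert[OF fin, of "\<lambda>y. H (X y)"] int2 II by simp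
  finally show ?thesis .
qed

lemma prod_indep_le:
  fixes h :: "'b \<Rightarrow> 'c \<Rightarrow> real" and X :: "('i \<Rightarrow> 'b) \<Rightarrow> 'c"
  assumes P: "prob_space P" and I: "finite I" "k \<in> I"
    and Xk: "\<And>y z. X (y(k:=z)) = X y"
    and H: "\<And>x. (\<integral>z. h z x \<partial>P) \<le> c" and c: "0 \<le> c"
    and int1: "integrable (PiM I (\<lambda>_. P)) (\<lambda>y. h (y k) (X y))"
  shows "(\<integral>y. h (y k) (X y) \<partial>PiM I (\<lambda>_. P)) \<le> c"
proof -
  interpret PP: product_prob_space "\<lambda>_. P" I
    by (simp add: product_prob_space_def product_prob_space_axioms_def P
        product_sigma_finite_def prob_space_imp_sigma_finite)
  interpret prob_space P by (rule P)
  interpret Q: prob_space "PiM (I - {k}) (\<lambda>_. P)"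
    by (rule prob_space_PiM) (rule P)
  have II: "I = insert k (I - {k})" using I by auto
  have fin: "finite (I - {k})" "k \<notin> I - {k}" using I by auto
  have "(\<integral>y. h (y k) (X y) \<partial>PiM I (\<lambda>_. P)) =
      (\<integral>x. (\<integral>z. h ((x(k:=z)) k) (X (x(k:=z))) \<partial>P) \<partial>PiM (I - {k}) (\<lambda>_. P))"
    using PP.product_integral_insert[OF fin, of "\<lambda>y. h (y k) (X y)"] int1 II by simp
  also have "\<dots> = (\<integral>x. (\<integral>z. h z (X x) \<partial>P) \<partial>PiM (I - {k}) (\<lambda>_. P))"
    by (simp add: Xk)
  also have "\<dots> \<le> c"
  proof (cases "integrable (PiM (I - {k}) (\<lambda>_. P)) (\<lambda>x. (\<integral>z. h z (X x) \<partial>P))")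
    case True
    then have "(\<integral>x. (\<integral>z. h z (X x) \<partial>P) \<partial>PiM (I - {k}) (\<lambda>_. P)) \<le> (\<integral>x. c \<partial>PiM (I - {k}) (\<lambda>_. P))"
      by (intro integral_mono) (auto intro: H)
    then show ?thesis by (simp add: Q.prob_space)
  next
    case False
    then show ?thesis by (simp add: not_integrable_integral_eq c)
  qed
  finally show ?thesis .
qed

lemma PiM_marginal:
  fixes f :: "'b \<Rightarrow> real"
  assumes P: "prob_space P" and I: "k \<in> I" and f: "f \<in> borel_measurable P"
  shows "integrable (PiM I (\<lambda>_. P)) (\<lambda>y. f (y k)) \<longleftrightarrow> integrable P f"
    and "(\<integral>y. f (y k) \<partial>PiM I (\<lambda>_. P)) = (\<integral>z. f z \<partial>P)"
proof -
  have d: "distr (PiM I (\<lambda>_. P)) P (\<lambda>y. y k) = P"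
    using distr_PiM_component[of I "\<lambda>_. P" k] P I by simp
  have m: "(\<lambda>y. y k) \<in> measurable (PiM I (\<lambda>_. P)) P"
    using I by (rule measurable_component_singleton)
  show "integrable (PiM I (\<lambda>_. P)) (\<lambda>y. f (y k)) \<longleftrightarrow> integrable P f"
    using integrable_distr_eq[OF m, of f] f d by simp
  show "(\<integral>y. f (y k) \<partial>PiM I (\<lambda>_. P)) = (\<integral>z. f z \<partial>P)"
    using integral_distr[OF m, of f] f d by simp
qed


definition sqint :: "'w measure \<Rightarrow> ('w \<Rightarrow> 'a::real_normed_vector) \<Rightarrow> bool" where
  "sqint Mx f \<longleftrightarrow> f \<in> borel_measurable Mx \<and> integrable Mx (\<lambda>y. (norm (f y))\<^sup>2)"

lemma sq_add_le: "(norm (a + b))\<^sup>2 \<le> 2 * (norm a)\<^sup>2 + 2 * (norm (b::'a::real_normed_vector))\<^sup>2"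
proof -
  have "norm (a + b) \<le> norm a + norm b" by (rule norm_triangle_ineq)
  then have "(norm (a + b))\<^sup>2 \<le> (norm a + norm b)\<^sup>2"
    by (simp add: power_mono)
  also have "\<dots> \<le> 2 * (norm a)\<^sup>2 + 2 * (norm b)\<^sup>2"
    using sum_squares_bound[of "norm a" "norm b"] by (simp add: power2_eq_square algebra_simps)
  finally show ?thesis .
qed

context finite_measure
begin

lemma sqint_add:
  fixes f g :: "'a \<Rightarrow> 'v::euclidean_space"
  assumes a: "sqint M f" "sqint M g"
  shows "sqint M (\<lambda>y. f y + g y)"
proof -
  have m: "f \<in> borel_measurable M" "g \<in> borel_measurable M"
    and i0: "integrable M (\<lambda>y. (norm (f y))\<^sup>2)" "integrable M (\<lambda>y. (norm (g y))\<^sup>2)"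
    using a unfolding sqint_def by auto
  have m2: "(\<lambda>y. f y + g y) \<in> borel_measurable M" using m by (rule borel_measurable_add)
  have i: "integrable M (\<lambda>y. 2 * (norm (f y))\<^sup>2 + 2 * (norm (g y))\<^sup>2)"
    using i0 by simp
  have "integrable M (\<lambda>y. (norm (f y + g y))\<^sup>2)"
  proof (rule Bochner_Integration.integrable_bound[OF i])
    show "(\<lambda>y. (norm (f y + g y))\<^sup>2) \<in> borel_measurable M" using m2 by measurable
    show "AE x in M. norm ((norm (f x + g x))\<^sup>2) \<le> norm (2 * (norm (f x))\<^sup>2 + 2 * (norm (g x))\<^sup>2)"
      by (intro AE_I2) (simp add: sq_add_le)
  qed
  then show ?thesis using m2 unfolding sqint_def by simp
qed

lemma sqint_scale:
  fixes f :: "_ \<Rightarrow> 'v::euclidean_space"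
  assumes "sqint M f" shows "sqint M (\<lambda>y. c *\<^sub>R f y)"
proof -
  have m: "f \<in> borel_measurable M" and i0: "integrable M (\<lambda>y. (norm (f y))\<^sup>2)"
    using assms unfolding sqint_def by auto
  have "integrable M (\<lambda>y. c\<^sup>2 * (norm (f y))\<^sup>2)" using i0 by (rule integrable_mult_right)
  moreover have "(\<lambda>y. c *\<^sub>R f y) \<in> borel_measurable M" using m by (rule borel_measurable_scaleR[OF borel_measurable_const])
  ultimately show ?thesis unfolding sqint_def by (simp add: power_mult_distrib)
qed

lemma sqint_minus:
  fixes f :: "_ \<Rightarrow> 'v::euclidean_space"
  assumes "sqint M f" shows "sqint M (\<lambda>y. - f y)"
  using sqint_scale[OF assms, of "-1"] by simp

lemma sqint_diff:
  fixes f g :: "_ \<Rightarrow> 'v::euclidean_space"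
  assumes "sqint M f" "sqint M g" shows "sqint M (\<lambda>y. f y - g y)"
  using sqint_add[OF assms(1) sqint_minus[OF assms(2)]] by simp

lemma sqint_const:
  fixes c :: "'v::euclidean_space"
  shows "sqint M (\<lambda>y. c)"
  unfolding sqint_def by simp

lemma sqint_sum:
  fixes f :: "_ \<Rightarrow> _ \<Rightarrow> 'v::euclidean_space"
  shows "(\<And>i. i \<in> A \<Longrightarrow> sqint M (f i)) \<Longrightarrow> sqint M (\<lambda>y. \<Sum>i\<in>A. f i y)"
proof (induction A rule: infinite_finite_induct)
  case (infinite A) then show ?case using sqint_const[of 0] by simp
next
  case empty then show ?case using sqint_const[of 0] by simp
next
  case (insert x F)
  have "sqint M (\<lambda>y. f x y + (\<Sum>i\<in>F. f i y))"
    using insert by (intro sqint_add) auto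
  then show ?case using insert by simp
qed

lemma sqint_inner:
  fixes f g :: "'a \<Rightarrow> 'v::euclidean_space"
  assumes "sqint M f" "sqint M g"
  shows "integrable M (\<lambda>y. f y \<bullet> g y)"
proof -
  have m: "f \<in> borel_measurable M" "g \<in> borel_measurable M"
    and i0: "integrable M (\<lambda>y. (norm (f y))\<^sup>2)" "integrable M (\<lambda>y. (norm (g y))\<^sup>2)"
    using assms unfolding sqint_def by auto
  have b: "\<bar>f y \<bullet> g y\<bar> \<le> (norm (f y))\<^sup>2 + (norm (g y))\<^sup>2" for y
  proof -
    have "\<bar>f y \<bullet> g y\<bar> \<le> norm (f y) * norm (g y)" by (rule Cauchy_Schwarz_ineq2)
    also have "\<dots> \<le> (norm (f y))\<^sup>2 + (norm (g y))\<^sup>2"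
      using sum_squares_bound[of "norm (f y)" "norm (g y)"] mult_nonneg_nonneg[OF norm_ge_zero norm_ge_zero, of "f y" "g y"]
      by linarith
    finally show ?thesis .
  qed
  have i: "integrable M (\<lambda>y. (norm (f y))\<^sup>2 + (norm (g y))\<^sup>2)" using i0 by simp
  show ?thesis
  proof (rule Bochner_Integration.integrable_bound[OF i])
    show "(\<lambda>y. f y \<bullet> g y) \<in> borel_measurable M" using m by (rule borel_measurable_inner)
    show "AE x in M. norm (f x \<bullet> g x) \<le> norm ((norm (f x))\<^sup>2 + (norm (g x))\<^sup>2)"
    proof (intro AE_I2)
      fix x
      have "0 \<le> (norm (f x))\<^sup>2 + (norm (g x))\<^sup>2" by simp
      then show "norm (f x \<bullet> g x) \<le> norm ((norm (f x))\<^sup>2 + (norm (g x))\<^sup>2)"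
        using b[of x] by (simp only: real_norm_def abs_of_nonneg)
    qed
  qed
qed

lemma sqint_sq: "sqint M f \<Longrightarrow> integrable M (\<lambda>y. (norm (f y))\<^sup>2)"
  unfolding sqint_def by simp

lemma sqint_meas: "sqint M f \<Longrightarrow> f \<in> borel_measurable M"
  unfolding sqint_def by simp

lemma sqint_real_integrable:
  fixes f :: "'a \<Rightarrow> real"
  assumes "sqint M f" shows "integrable M f"
  using sqint_inner[OF assms sqint_const[of 1]] by simp

end



lemma le_1_sq: "t \<le> 1 + t\<^sup>2" for t :: real
proof -
  have "(t - 1/2)\<^sup>2 = t\<^sup>2 - t + 1/4" by (simp add: power2_eq_square algebra_simps)
  moreover have "0 \<le> (t - 1/2)\<^sup>2" by simp
  ultimately show ?thesis by linarith
qed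

lemma line_has_deriv:
  fixes f :: "'a::real_inner \<Rightarrow> real"
  assumes d: "\<And>p. (f has_derivative (\<lambda>h. G p \<bullet> h)) (at p)"
  shows "((\<lambda>t. f (x + t *\<^sub>R v)) has_derivative (\<lambda>h. h * (G (x + t *\<^sub>R v) \<bullet> v))) (at t within S)"
proof -
  have l: "((\<lambda>t. x + t *\<^sub>R v) has_derivative (\<lambda>h. h *\<^sub>R v)) (at t within S)"
    by (auto intro!: derivative_eq_intros)
  have "((\<lambda>t. f (x + t *\<^sub>R v)) has_derivative (\<lambda>h. G (x + t *\<^sub>R v) \<bullet> (h *\<^sub>R v))) (at t within S)"
    by (rule has_derivative_compose[OF l d])
  then show ?thesis by (simp add: mult.commute)
qed

lemma tangent_lower:
  fixes f :: "'a::real_inner \<Rightarrow> real"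
  assumes d: "\<And>p. (f has_derivative (\<lambda>h. G p \<bullet> h)) (at p)"
    and cv: "convex_on UNIV f"
  shows "f y \<ge> f x + G x \<bullet> (y - x)"
proof -
  define v where "v = y - x"
  define \<phi> where "\<phi> t = f (x + t *\<^sub>R v)" for t :: real
  have cphi: "convex_on UNIV \<phi>"
  proof (rule convex_onI)
    fix u a b :: real assume u: "0 < u" "u < 1"
    have e: "x + ((1 - u) *\<^sub>R a + u *\<^sub>R b) *\<^sub>R v = (1 - u) *\<^sub>R (x + a *\<^sub>R v) + u *\<^sub>R (x + b *\<^sub>R v)"
      by (simp add: algebra_simps)
    show "\<phi> ((1 - u) *\<^sub>R a + u *\<^sub>R b) \<le> (1 - u) * \<phi> a + u * \<phi> b"
      unfolding \<phi>_def e using convex_onD[OF cv, of u] u by simp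
  qed simp
  have "(\<phi> has_field_derivative (G (x + 0 *\<^sub>R v) \<bullet> v)) (at 0 within UNIV)"
    unfolding \<phi>_def
    by (rule has_derivative_imp_has_field_derivative[OF line_has_deriv[OF d]]) simp
  then have "\<phi> 1 - \<phi> 0 \<ge> (G x \<bullet> v) * (1 - 0)"
    by (intro convex_on_imp_above_tangent[OF cphi]) auto
  then show ?thesis unfolding \<phi>_def v_def by simp
qed

lemma smooth_upper:
  fixes f :: "'a::real_inner \<Rightarrow> real"
  assumes d: "\<And>p. (f has_derivative (\<lambda>h. G p \<bullet> h)) (at p)"
    and lip: "\<And>p q. norm (G p - G q) \<le> L * norm (p - q)" and L0: "0 \<le> L"
  shows "f y \<le> f x + G x \<bullet> (y - x) + L * (norm (y - x))\<^sup>2"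
proof -
  define v where "v = y - x"
  define \<phi> where "\<phi> t = f (x + t *\<^sub>R v)" for t :: real
  have dd: "\<And>t. (\<phi> has_derivative (\<lambda>h. h * (G (x + t *\<^sub>R v) \<bullet> v))) (at t)"
    unfolding \<phi>_def by (rule line_has_deriv[OF d])
  have "continuous_on {0..1} \<phi>"
    using dd by (meson continuous_at_imp_continuous_on has_derivative_continuous)
  then obtain t where t: "0 < t" "t < 1" "\<phi> 1 - \<phi> 0 = 1 * (G (x + t *\<^sub>R v) \<bullet> v)"
    using mvt[of 0 1 \<phi> "\<lambda>t h. h * (G (x + t *\<^sub>R v) \<bullet> v)"] dd by auto
  have "(G (x + t *\<^sub>R v) - G x) \<bullet> v \<le> norm (G (x + t *\<^sub>R v) - G x) * norm v"
    by (rule real_inner_class.Cauchy_Schwarz_ineq2[THEN abs_le_D1])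
  also have "\<dots> \<le> (L * norm (t *\<^sub>R v)) * norm v"
    using lip[of "x + t *\<^sub>R v" x] by (intro mult_right_mono) auto
  also have "\<dots> \<le> L * (norm v)\<^sup>2"
  proof -
    have "L * norm (t *\<^sub>R v) * norm v = (L * t) * (norm v)\<^sup>2" using t by (simp add: power2_eq_square)
    also have "\<dots> \<le> L * (norm v)\<^sup>2" using t L0 by (intro mult_right_mono) (auto simp: mult_left_le)
    finally show ?thesis .
  qed
  finally have "G (x + t *\<^sub>R v) \<bullet> v \<le> G x \<bullet> v + L * (norm v)\<^sup>2" by (simp add: inner_diff_left)
  then show ?thesis using t unfolding \<phi>_def v_def by simp
qed

lemma lip_cont:
  assumes lip: "\<And>p q. norm (G p - G q) \<le> L * norm (p - q)" and L: "L > 0"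
  shows "continuous_on UNIV G"
proof (rule lipschitz_on_continuous_on)
  show "L-lipschitz_on UNIV G"
    using lip L by (auto simp: lipschitz_on_def dist_norm)
qed

locale dsetting =
  fixes P :: "'b measure" and loss :: "'b \<Rightarrow> 'a::euclidean_space \<Rightarrow> real" and g :: "'b \<Rightarrow> 'a \<Rightarrow> 'a"
    and gradF :: "'a \<Rightarrow> 'a" and xs :: 'a and L D \<sigma> :: real
  assumes P: "prob_space P"
    and grad: "\<And>z x. (loss z has_derivative (\<lambda>h. g z x \<bullet> h)) (at x)"
    and convex: "\<And>z. convex_on UNIV (loss z)"
    and L_pos: "L > 0"
    and smooth: "\<And>z x y. norm (g z x - g z y) \<le> L * norm (x - y)"
    and loss_int: "\<And>x. integrable P (\<lambda>z. loss z x)"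
    and g_meas: "\<And>x. (\<lambda>z. g z x) \<in> borel_measurable P"
    and D_int: "\<And>x. integrable P (\<lambda>z. (norm (g z x))\<^sup>2)"
    and D_bound: "\<And>x. (\<integral>z. (norm (g z x))\<^sup>2 \<partial>P) \<le> D"
    and gradF: "\<And>x. ((\<lambda>y. \<integral>z. loss z y \<partial>P) has_derivative (\<lambda>h. gradF x \<bullet> h)) (at x)"
    and \<sigma>_nonneg: "\<sigma> \<ge> 0"
    and var_int: "\<And>x. integrable P (\<lambda>z. (norm (g z x - gradF x))\<^sup>2)"
    and var_bound: "\<And>x. (\<integral>z. (norm (g z x - gradF x))\<^sup>2 \<partial>P) \<le> \<sigma>\<^sup>2"
    and xs_min: "\<And>x. (\<integral>z. loss z xs \<partial>P) \<le> (\<integral>z. loss z x \<partial>P)"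
begin

definition Gb :: "'a \<Rightarrow> 'a" where "Gb x = (\<integral>z. g z x \<partial>P)"
definition F :: "'a \<Rightarrow> real" where "F x = (\<integral>z. loss z x \<partial>P)"

lemma PP: "prob_space P" by (rule P)

lemma D_nonneg: "0 \<le> D"
proof -
  have "0 \<le> (\<integral>z. (norm (g z 0))\<^sup>2 \<partial>P)" by (rule integral_nonneg_AE) simp
  then show ?thesis using D_bound[of 0] by linarith
qed

lemma g_int: "integrable P (\<lambda>z. g z x)"
proof -
  interpret prob_space P by (rule P)
  have i: "integrable P (\<lambda>z. 1 + (norm (g z x))\<^sup>2)" using D_int by simp
  show ?thesis
  proof (rule Bochner_Integration.integrable_bound[OF i])
    show "(\<lambda>z. g z x) \<in> borel_measurable P" by (rule g_meas)
    show "AE z in P. norm (g z x) \<le> norm (1 + (norm (g z x))\<^sup>2)"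
    proof (intro AE_I2)
      fix z
      have "norm (g z x) \<le> 1 + (norm (g z x))\<^sup>2" by (rule le_1_sq)
      then show "norm (g z x) \<le> norm (1 + (norm (g z x))\<^sup>2)" by simp
    qed
  qed
qed

lemma loss_lower: "loss z y \<ge> loss z x + g z x \<bullet> (y - x)"
  by (rule tangent_lower[OF grad convex])

lemma loss_upper: "loss z y \<le> loss z x + g z x \<bullet> (y - x) + L * (norm (y - x))\<^sup>2"
  using L_pos by (intro smooth_upper[OF grad smooth]) auto

lemma g_cont: "continuous_on UNIV (g z)"
  by (rule lip_cont[OF smooth L_pos])

lemma loss_cont: "continuous_on UNIV (loss z)"
  using grad by (meson continuous_at_imp_continuous_on has_derivative_continuous)

lemma loss_meas: "(\<lambda>z. loss z x) \<in> borel_measurable P"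
  using loss_int by auto

lemma F_lower: "F y \<ge> F x + Gb x \<bullet> (y - x)"
proof -
  have "F x + Gb x \<bullet> (y - x) = (\<integral>z. loss z x + g z x \<bullet> (y - x) \<partial>P)"
    unfolding F_def Gb_def using loss_int g_int by (simp add: integral_add)
  also have "\<dots> \<le> F y" unfolding F_def
    using loss_int g_int by (intro integral_mono) (auto intro: loss_lower)
  finally show ?thesis .
qed

lemma F_upper: "F y \<le> F x + Gb x \<bullet> (y - x) + L * (norm (y - x))\<^sup>2"
proof -
  interpret prob_space P by (rule P)
  have "F y \<le> (\<integral>z. loss z x + g z x \<bullet> (y - x) + L * (norm (y - x))\<^sup>2 \<partial>P)" unfolding F_def
    using loss_int g_int by (intro integral_mono) (auto intro: loss_upper)
  also have "\<dots> = F x + Gb x \<bullet> (y - x) + L * (norm (y - x))\<^sup>2"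
    unfolding F_def Gb_def using loss_int g_int by (simp add: integral_add prob_space)
  finally show ?thesis .
qed

lemma Gb_eq: "Gb x = gradF x"
proof -
  define \<phi> where "\<phi> y = F y - Gb x \<bullet> y" for y
  have d: "(\<phi> has_derivative (\<lambda>h. gradF x \<bullet> h - Gb x \<bullet> h)) (at x)"
    unfolding \<phi>_def F_def
    by (rule has_derivative_diff[OF gradF]) (rule has_derivative_inner_right[OF has_derivative_ident])
  have "eventually (\<lambda>y. \<phi> x \<le> \<phi> y) (at x)"
  proof (intro always_eventually allI)
    fix y show "\<phi> x \<le> \<phi> y" using F_lower[where x=x and y=y] unfolding \<phi>_def
      by (simp add: inner_diff_right)
  qed
  then have "(\<lambda>h. gradF x \<bullet> h - Gb x \<bullet> h) = (\<lambda>h. 0)"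
    by (rule has_derivative_local_min[OF d])
  then have "gradF x \<bullet> (gradF x - Gb x) - Gb x \<bullet> (gradF x - Gb x) = 0" by metis
  then have "(gradF x - Gb x) \<bullet> (gradF x - Gb x) = 0" by (simp add: inner_diff_left)
  then show ?thesis by simp
qed

lemma Gb_lip: "norm (Gb p - Gb q) \<le> L * norm (p - q)"
proof -
  interpret prob_space P by (rule P)
  have "Gb p - Gb q = (\<integral>z. g z p - g z q \<partial>P)" unfolding Gb_def using g_int by simp
  also have "norm \<dots> \<le> (\<integral>z. norm (g z p - g z q) \<partial>P)" by (rule integral_norm_bound)
  also have "\<dots> \<le> (\<integral>z. L * norm (p - q) \<partial>P)"
    using g_int by (intro integral_mono) (auto intro: smooth)
  also have "\<dots> = L * norm (p - q)" by (simp add: prob_space)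
  finally show ?thesis .
qed

lemma Gb_cont: "continuous_on UNIV Gb"
  by (rule lip_cont[OF Gb_lip L_pos])

lemma F_cont: "continuous_on UNIV F"
proof -
  have "\<And>x. isCont F x" unfolding F_def using gradF by (rule has_derivative_continuous)
  then show ?thesis by (simp add: continuous_at_imp_continuous_on)
qed

lemma Gb_sq: "(norm (Gb x))\<^sup>2 \<le> 4 * L * (F x - F xs)"
proof -
  define y where "y = x - (1 / (2 * L)) *\<^sub>R Gb x"
  have "F xs \<le> F y" using xs_min unfolding F_def by blast
  also have "\<dots> \<le> F x + Gb x \<bullet> (y - x) + L * (norm (y - x))\<^sup>2" by (rule F_upper)
  also have "\<dots> = F x - (norm (Gb x))\<^sup>2 / (4 * L)"
  proof -
    have a: "Gb x \<bullet> (y - x) = - (norm (Gb x))\<^sup>2 / (2 * L)"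
      unfolding y_def by (simp add: power2_norm_eq_inner)
    have b: "(norm (y - x))\<^sup>2 = (norm (Gb x))\<^sup>2 / (4 * L\<^sup>2)"
      unfolding y_def using L_pos by (simp add: power_mult_distrib power_divide)
    show ?thesis unfolding a b using L_pos by (simp add: field_simps power2_eq_square)
  qed
  finally show ?thesis using L_pos by (simp add: field_simps)
qed

lemma ab_le: "a * b \<le> a\<^sup>2 + b\<^sup>2" if "0 \<le> a" "0 \<le> (b::real)" for a b
  using sum_squares_bound[of a b] mult_nonneg_nonneg[OF that] by linarith

lemma loss_bound: "\<bar>loss z x\<bar> \<le> \<bar>loss z 0\<bar> + (norm (g z 0))\<^sup>2 + (norm x)\<^sup>2 + L * (norm x)\<^sup>2"
proof -
  have u: "loss z x \<le> loss z 0 + g z 0 \<bullet> x + L * (norm x)\<^sup>2" using loss_upper[where z=z and x=0 and y=x] by simp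
  have l: "loss z x \<ge> loss z 0 + g z 0 \<bullet> x" using loss_lower[where z=z and x=0 and y=x] by simp
  have c: "\<bar>g z 0 \<bullet> x\<bar> \<le> (norm (g z 0))\<^sup>2 + (norm x)\<^sup>2"
    using Cauchy_Schwarz_ineq2[of "g z 0" x] ab_le[of "norm (g z 0)" "norm x"] by simp
  have "0 \<le> L * (norm x)\<^sup>2" using L_pos by simp
  then show ?thesis using u l c by linarith
qed

lemma F_bound: "\<bar>F x\<bar> \<le> \<bar>F 0\<bar> + (norm (Gb 0))\<^sup>2 + (norm x)\<^sup>2 + L * (norm x)\<^sup>2"
proof -
  have u: "F x \<le> F 0 + Gb 0 \<bullet> x + L * (norm x)\<^sup>2" using F_upper[where x=0 and y=x] by simp
  have l: "F x \<ge> F 0 + Gb 0 \<bullet> x" using F_lower[where x=0 and y=x] by simp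
  have c: "\<bar>Gb 0 \<bullet> x\<bar> \<le> (norm (Gb 0))\<^sup>2 + (norm x)\<^sup>2"
    using Cauchy_Schwarz_ineq2[of "Gb 0" x] ab_le[of "norm (Gb 0)" "norm x"] by simp
  have "0 \<le> L * (norm x)\<^sup>2" using L_pos by simp
  then show ?thesis using u l c by linarith
qed

lemma lip_sq_bound:
  assumes "\<And>p q. norm (G p - G q) \<le> L * norm (p - q)"
  shows "(norm (G x))\<^sup>2 \<le> 2 * (norm (G 0))\<^sup>2 + 2 * L\<^sup>2 * (norm x)\<^sup>2"
proof -
  have "(norm (G x))\<^sup>2 = (norm (G 0 + (G x - G 0)))\<^sup>2" by simp
  also have "\<dots> \<le> 2 * (norm (G 0))\<^sup>2 + 2 * (norm (G x - G 0))\<^sup>2" by (rule sq_add_le)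
  also have "(norm (G x - G 0))\<^sup>2 \<le> (L * norm x)\<^sup>2"
    using assms[of x 0] by (intro power_mono) auto
  finally show ?thesis by (simp add: power_mult_distrib)
qed

lemma g_bound: "(norm (g z x))\<^sup>2 \<le> 2 * (norm (g z 0))\<^sup>2 + 2 * L\<^sup>2 * (norm x)\<^sup>2"
  by (rule lip_sq_bound[OF smooth])

lemma Gb_bound: "(norm (Gb x))\<^sup>2 \<le> 2 * (norm (Gb 0))\<^sup>2 + 2 * L\<^sup>2 * (norm x)\<^sup>2"
  by (rule lip_sq_bound[OF Gb_lip])

lemma var_bound': "(\<integral>z. (norm (g z x - Gb x))\<^sup>2 \<partial>P) \<le> \<sigma>\<^sup>2"
  using var_bound by (simp add: Gb_eq)

lemma var_int': "integrable P (\<lambda>z. (norm (g z x - Gb x))\<^sup>2)"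
  using var_int by (simp add: Gb_eq)

end



definition mean :: "nat \<Rightarrow> (nat \<Rightarrow> 'a::real_vector) \<Rightarrow> 'a" where
  "mean N v = (1 / real N) *\<^sub>R (\<Sum>i<N. v i)"
definition cons :: "nat \<Rightarrow> (nat \<Rightarrow> 'a::real_normed_vector) \<Rightarrow> real" where
  "cons N v = (\<Sum>i<N. (norm (v i - mean N v))\<^sup>2)"
definition mix :: "(nat \<Rightarrow> nat \<Rightarrow> real) \<Rightarrow> nat \<Rightarrow> (nat \<Rightarrow> 'a::real_vector) \<Rightarrow> nat \<Rightarrow> 'a" where
  "mix W N v = (\<lambda>i. \<Sum>j<N. W i j *\<^sub>R v j)"

lemma mean_add: "mean N (\<lambda>i. u i + v i) = mean N u + mean N v"
  unfolding mean_def by (simp add: sum.distrib scaleR_add_right)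
lemma mean_diff: "mean N (\<lambda>i. u i - v i) = mean N u - mean N v"
  unfolding mean_def by (simp add: sum_subtractf scaleR_diff_right)
lemma mean_scale: "mean N (\<lambda>i. c *\<^sub>R v i) = c *\<^sub>R mean N v"
  unfolding mean_def by (simp add: scaleR_sum_right[symmetric])
lemma mean_const: "N \<ge> 1 \<Longrightarrow> mean N (\<lambda>i. c) = c"
  unfolding mean_def by (simp add: sum_constant_scaleR)
lemma mean_cong: "(\<And>i. i < N \<Longrightarrow> u i = v i) \<Longrightarrow> mean N u = mean N v"
  unfolding mean_def by simp

lemma mean_mix:
  assumes col: "\<forall>j<N. (\<Sum>i<N. W i j) = 1"
  shows "mean N (mix W N v) = mean N v"
proof -
  have "(\<Sum>i<N. \<Sum>j<N. W i j *\<^sub>R v j) = (\<Sum>j<N. \<Sum>i<N. W i j *\<^sub>R v j)" by (rule sum.swap)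
  also have "\<dots> = (\<Sum>j<N. (\<Sum>i<N. W i j) *\<^sub>R v j)" by (simp add: scaleR_sum_left)
  also have "\<dots> = (\<Sum>j<N. v j)" using col by simp
  finally show ?thesis unfolding mean_def mix_def by simp
qed

lemma young: "(norm (a + b))\<^sup>2 \<le> (1 + e) * (norm a)\<^sup>2 + (1 + 1 / e) * (norm (b::'a::real_inner))\<^sup>2"
  if e: "e > 0" for e :: real
proof -
  have "(norm (a + b))\<^sup>2 = (norm a)\<^sup>2 + 2 * (a \<bullet> b) + (norm b)\<^sup>2"
    by (simp add: power2_norm_eq_inner inner_add_left inner_add_right inner_commute)
  moreover have "a \<bullet> b \<le> norm a * norm b" by (rule real_inner_class.Cauchy_Schwarz_ineq2[THEN abs_le_D1])
  moreover have "2 * (norm a * norm b) \<le> e * (norm a)\<^sup>2 + (norm b)\<^sup>2 / e"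
  proof -
    have "0 \<le> (e * norm a - norm b)\<^sup>2 / e" using e by simp
    also have "(e * norm a - norm b)\<^sup>2 / e = e * (norm a)\<^sup>2 - 2 * (norm a * norm b) + (norm b)\<^sup>2 / e"
      using e by (simp add: power2_eq_square field_simps)
    finally show ?thesis by linarith
  qed
  ultimately show ?thesis by (simp add: algebra_simps)
qed

lemma cons_add:
  assumes e: "e > 0"
  shows "cons N (\<lambda>i. u i + v i) \<le> (1 + e) * cons N u + (1 + 1 / e) * cons N (v :: nat \<Rightarrow> 'a::real_inner)"
proof -
  have "cons N (\<lambda>i. u i + v i) = (\<Sum>i<N. (norm ((u i - mean N u) + (v i - mean N v)))\<^sup>2)"
    unfolding cons_def mean_add by (simp add: algebra_simps)
  also have "\<dots> \<le> (\<Sum>i<N. (1 + e) * (norm (u i - mean N u))\<^sup>2 + (1 + 1 / e) * (norm (v i - mean N v))\<^sup>2)"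
    by (intro sum_mono young e)
  also have "\<dots> = (1 + e) * cons N u + (1 + 1 / e) * cons N v"
    unfolding cons_def by (simp add: sum.distrib sum_distrib_left)
  finally show ?thesis .
qed

lemma cons_scale: "cons N (\<lambda>i. c *\<^sub>R v i) = c\<^sup>2 * cons N v"
  unfolding cons_def mean_scale
  by (simp add: sum_distrib_left scaleR_diff_right[symmetric] power_mult_distrib)

lemma cons_le_sum:
  shows "cons N v \<le> (\<Sum>i<N. (norm (v i :: 'a::real_inner))\<^sup>2)"
proof (cases "N = 0")
  case True then show ?thesis by (simp add: cons_def)
next
  case False
  define m where "m = mean N v"
  have sv: "(\<Sum>i<N. v i) = real N *\<^sub>R m" unfolding m_def mean_def using False by simp
  have "cons N v = (\<Sum>i<N. (norm (v i))\<^sup>2 - 2 * (v i \<bullet> m) + (norm m)\<^sup>2)"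
    unfolding cons_def m_def[symmetric]
    by (intro sum.cong refl) (simp add: power2_norm_eq_inner inner_diff_left inner_diff_right inner_commute)
  also have "\<dots> = (\<Sum>i<N. (norm (v i))\<^sup>2) - 2 * ((\<Sum>i<N. v i) \<bullet> m) + real N * (norm m)\<^sup>2"
    by (simp add: sum.distrib sum_subtractf sum_distrib_left inner_sum_left)
  also have "\<dots> = (\<Sum>i<N. (norm (v i))\<^sup>2) - real N * (norm m)\<^sup>2"
    unfolding sv by (simp add: power2_norm_eq_inner)
  also have "\<dots> \<le> (\<Sum>i<N. (norm (v i))\<^sup>2)" by simp
  finally show ?thesis .
qed

lemma spec_bound:
  fixes A :: "nat \<Rightarrow> nat \<Rightarrow> real"
  shows "(\<Sum>i<N. (\<Sum>j<N. A i j * w j)\<^sup>2) \<le> (spec_norm N A)\<^sup>2 * (\<Sum>j<N. (w j)\<^sup>2)"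
proof -
  define S where "S = {sqrt (\<Sum>i<N. (\<Sum>j<N. A i j * v j)\<^sup>2) | v. (\<Sum>j<N. (v j)\<^sup>2) = 1}"
  have sn: "spec_norm N A = Sup S" unfolding spec_norm_def S_def by simp
  have bdd: "bdd_above S"
  proof (rule bdd_aboveI)
    fix s assume "s \<in> S"
    then obtain v where s: "s = sqrt (\<Sum>i<N. (\<Sum>j<N. A i j * v j)\<^sup>2)" and v: "(\<Sum>j<N. (v j)\<^sup>2) = 1"
      unfolding S_def by auto
    have vj: "\<bar>v j\<bar> \<le> 1" if "j < N" for j
    proof -
      have "(v j)\<^sup>2 \<le> (\<Sum>j<N. (v j)\<^sup>2)"
        using that by (intro member_le_sum) auto
      then have "(v j)\<^sup>2 \<le> 1\<^sup>2" using v by simp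
      then show ?thesis using abs_le_square_iff[of "v j" 1] by simp
    qed
    have "\<bar>\<Sum>j<N. A i j * v j\<bar> \<le> (\<Sum>j<N. \<bar>A i j\<bar>)" for i
    proof -
      have "\<bar>\<Sum>j<N. A i j * v j\<bar> \<le> (\<Sum>j<N. \<bar>A i j * v j\<bar>)" by (rule sum_abs)
      also have "\<dots> \<le> (\<Sum>j<N. \<bar>A i j\<bar>)"
        using vj by (intro sum_mono) (simp add: abs_mult mult_left_le)
      finally show ?thesis .
    qed
    then have "(\<Sum>j<N. A i j * v j)\<^sup>2 \<le> (\<Sum>j<N. \<bar>A i j\<bar>)\<^sup>2" for i
      by (metis abs_le_square_iff abs_sum_abs)
    then have "(\<Sum>i<N. (\<Sum>j<N. A i j * v j)\<^sup>2) \<le> (\<Sum>i<N. (\<Sum>j<N. \<bar>A i j\<bar>)\<^sup>2)"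
      by (intro sum_mono) auto
    then show "s \<le> sqrt (\<Sum>i<N. (\<Sum>j<N. \<bar>A i j\<bar>)\<^sup>2)" unfolding s by simp
  qed
  define r where "r = sqrt (\<Sum>j<N. (w j)\<^sup>2)"
  have r2: "r\<^sup>2 = (\<Sum>j<N. (w j)\<^sup>2)" unfolding r_def by (simp add: sum_nonneg)
  show ?thesis
  proof (cases "r = 0")
    case True
    then have "\<forall>j\<in>{..<N}. (w j)\<^sup>2 = 0" using r2 by (subst sum_nonneg_eq_0_iff[symmetric]) auto
    then have "\<And>i. (\<Sum>j<N. A i j * w j) = 0" by simp
    then show ?thesis by (simp add: sum_nonneg)
  next
    case False
    then have rpos: "r > 0" unfolding r_def using sum_nonneg[of "{..<N}" "\<lambda>j. (w j)\<^sup>2"]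
      by (simp add: less_le)
    define v where "v j = w j / r" for j
    have "(\<Sum>j<N. (v j)\<^sup>2) = (\<Sum>j<N. (w j)\<^sup>2) / r\<^sup>2"
      unfolding v_def by (simp add: power_divide sum_divide_distrib)
    moreover have "r\<^sup>2 \<noteq> 0" using rpos by simp
    ultimately have v1: "(\<Sum>j<N. (v j)\<^sup>2) = 1" using r2 by simp
    define s where "s = sqrt (\<Sum>i<N. (\<Sum>j<N. A i j * v j)\<^sup>2)"
    have sS: "s \<in> S" unfolding s_def S_def using v1 by blast
    then have sle: "s \<le> Sup S" using bdd by (rule cSup_upper)
    have s0: "0 \<le> s" unfolding s_def by (simp add: sum_nonneg)
    have "(\<Sum>i<N. (\<Sum>j<N. A i j * w j)\<^sup>2) = r\<^sup>2 * (\<Sum>i<N. (\<Sum>j<N. A i j * v j)\<^sup>2)"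
    proof -
      have e: "\<And>i. (\<Sum>j<N. A i j * w j) = r * (\<Sum>j<N. A i j * v j)"
        unfolding v_def sum_distrib_left using rpos by (intro sum.cong) auto
      have "(\<Sum>i<N. (r * (\<Sum>j<N. A i j * v j))\<^sup>2) = (\<Sum>i<N. r\<^sup>2 * (\<Sum>j<N. A i j * v j)\<^sup>2)"
        by (simp only: power_mult_distrib)
      also have "\<dots> = r\<^sup>2 * (\<Sum>i<N. (\<Sum>j<N. A i j * v j)\<^sup>2)"
        by (rule sum_distrib_left[symmetric])
      finally show ?thesis by (simp only: e)
    qed
    also have "\<dots> = r\<^sup>2 * s\<^sup>2" unfolding s_def by (simp add: sum_nonneg)
    also have "\<dots> \<le> r\<^sup>2 * (Sup S)\<^sup>2" using sle s0 by (intro mult_left_mono power_mono) auto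
    finally show ?thesis unfolding sn r2 by (simp add: mult.commute)
  qed
qed

lemma norm_sq_basis: "(norm (x::'a::euclidean_space))\<^sup>2 = (\<Sum>b\<in>Basis. (x \<bullet> b)\<^sup>2)"
proof -
  have "(norm x)\<^sup>2 = x \<bullet> x" by (rule power2_norm_eq_inner)
  also have "\<dots> = (\<Sum>b\<in>Basis. (x \<bullet> b) * (x \<bullet> b))" by (rule euclidean_inner)
  finally show ?thesis by (simp add: power2_eq_square)
qed

lemma contraction:
  fixes v :: "nat \<Rightarrow> 'a::euclidean_space"
  assumes row: "\<forall>i<N. (\<Sum>j<N. W i j) = 1" and col: "\<forall>j<N. (\<Sum>i<N. W i j) = 1"
    and sn: "spec_norm N (\<lambda>i j. W i j - 1 / real N) = \<rho>"
  shows "cons N (mix W N v) \<le> \<rho>\<^sup>2 * cons N v"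
proof -
  define m where "m = mean N v"
  define u where "u j = v j - m" for j
  define A where "A i j = W i j - 1 / real N" for i j
  have dev: "mix W N v i - mean N (mix W N v) = (\<Sum>j<N. A i j *\<^sub>R u j)" if i: "i < N" for i
  proof (cases "N = 0")
    case True then show ?thesis using i by simp
  next
    case False
    have c0: "(\<Sum>j<N. (1 / real N) *\<^sub>R m) = m"
      using False by (subst sum_constant_scaleR) simp
    have "(\<Sum>j<N. A i j *\<^sub>R u j) = (\<Sum>j<N. W i j *\<^sub>R v j - W i j *\<^sub>R m - (1 / real N) *\<^sub>R v j + (1 / real N) *\<^sub>R m)"
      unfolding A_def u_def by (intro sum.cong refl) (simp add: algebra_simps)
    also have "\<dots> = (\<Sum>j<N. W i j *\<^sub>R v j) - (\<Sum>j<N. W i j) *\<^sub>R m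
        - (1 / real N) *\<^sub>R (\<Sum>j<N. v j) + (1 / real N) *\<^sub>R (real N *\<^sub>R m)"
      using c0 False by (simp add: sum_subtractf sum.distrib scaleR_sum_left scaleR_sum_right)
    also have "\<dots> = mix W N v i - m"
    proof -
      have c: "(\<Sum>j<N. (1 / real N) *\<^sub>R m) = m"
        using False by (subst sum_constant_scaleR) simp
      show ?thesis using row i False c unfolding mix_def m_def mean_def by simp
    qed
    finally show ?thesis unfolding mean_mix[OF col] m_def by simp
  qed
  have "cons N (mix W N v) = (\<Sum>i<N. (norm (\<Sum>j<N. A i j *\<^sub>R u j))\<^sup>2)"
    unfolding cons_def using dev by simp
  also have "\<dots> = (\<Sum>i<N. \<Sum>b\<in>Basis. (\<Sum>j<N. A i j * (u j \<bullet> b))\<^sup>2)"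
    unfolding norm_sq_basis by (simp add: inner_sum_left)
  also have "\<dots> = (\<Sum>b\<in>Basis. \<Sum>i<N. (\<Sum>j<N. A i j * (u j \<bullet> b))\<^sup>2)" by (rule sum.swap)
  also have "\<dots> \<le> (\<Sum>b\<in>(Basis::'a set). \<rho>\<^sup>2 * (\<Sum>j<N. (u j \<bullet> b)\<^sup>2))"
  proof (rule sum_mono)
    fix b :: 'a
    show "(\<Sum>i<N. (\<Sum>j<N. A i j * (u j \<bullet> b))\<^sup>2) \<le> \<rho>\<^sup>2 * (\<Sum>j<N. (u j \<bullet> b)\<^sup>2)"
      using spec_bound[where N=N and A=A and w="\<lambda>j. u j \<bullet> b"] sn unfolding A_def by simp
  qed
  also have "\<dots> = \<rho>\<^sup>2 * (\<Sum>j<N. \<Sum>b\<in>(Basis::'a set). (u j \<bullet> b)\<^sup>2)"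
    by (simp add: sum_distrib_left sum.swap[of _ "Basis::'a set"])
  also have "\<dots> = \<rho>\<^sup>2 * cons N v"
    unfolding cons_def u_def m_def norm_sq_basis by simp
  finally show ?thesis .
qed

definition xk where "xk G W N \<eta> k = fst (dogd G W N \<eta> k)"
definition sk where "sk G W N \<eta> k = snd (dogd G W N \<eta> k)"

lemma xk_0: "xk G W N \<eta> 0 = (\<lambda>i. 0)" unfolding xk_def by simp
lemma sk_0: "sk G W N \<eta> 0 = (\<lambda>i. G 1 i 0)" unfolding sk_def by simp
lemma xk_Suc: "xk G W N \<eta> (Suc k) = (\<lambda>i. mix W N (xk G W N \<eta> k) i - \<eta> *\<^sub>R sk G W N \<eta> k i)"
  unfolding xk_def sk_def mix_def by (simp add: Let_def)
lemma sk_Suc: "sk G W N \<eta> (Suc k) = (\<lambda>i. mix W N (sk G W N \<eta> k) i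
    + G (k + 2) i (xk G W N \<eta> (Suc k) i) - G (k + 1) i (xk G W N \<eta> k i))"
  unfolding xk_def sk_def mix_def by (simp add: Let_def)

lemma dogd_cong:
  "(\<And>s i x. s \<le> k + 1 \<Longrightarrow> G s i x = G' s i x) \<Longrightarrow> dogd G W N \<eta> k = dogd G' W N \<eta> k"
proof (induction k)
  case 0 then show ?case by simp
next
  case (Suc k)
  have "dogd G W N \<eta> k = dogd G' W N \<eta> k" using Suc by simp
  then show ?case using Suc.prems by (simp add: Let_def)
qed

lemma xk_cong:
  assumes "\<And>s i x. s \<le> k \<Longrightarrow> G s i x = G' s i x"
  shows "xk G W N \<eta> k = xk G' W N \<eta> k"
proof (cases k)
  case 0 then show ?thesis by (simp add: xk_0)
next
  case (Suc k')
  have "dogd G W N \<eta> k' = dogd G' W N \<eta> k'" using assms Suc by (intro dogd_cong) auto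
  then show ?thesis unfolding Suc xk_Suc by (simp add: xk_def sk_def)
qed

lemma sk_cong:
  assumes "\<And>s i x. s \<le> k + 1 \<Longrightarrow> G s i x = G' s i x"
  shows "sk G W N \<eta> k = sk G' W N \<eta> k"
  unfolding sk_def using dogd_cong[OF assms] by simp

lemma tracking:
  assumes col: "\<forall>j<N. (\<Sum>i<N. W i j) = 1"
  shows "mean N (sk G W N \<eta> k) = mean N (\<lambda>i. G (k + 1) i (xk G W N \<eta> k i))"
proof (induction k)
  case 0 then show ?case by (simp add: sk_0 xk_0)
next
  case (Suc k)
  show ?case unfolding sk_Suc[of G W N \<eta> k]
    by (simp add: mean_add mean_diff mean_mix[OF col] Suc)
qed

lemma mean_xk_Suc:
  assumes col: "\<forall>j<N. (\<Sum>i<N. W i j) = 1"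
  shows "mean N (xk G W N \<eta> (Suc k)) = mean N (xk G W N \<eta> k) - \<eta> *\<^sub>R mean N (sk G W N \<eta> k)"
  unfolding xk_Suc[of G W N \<eta> k] by (simp add: mean_diff mean_scale mean_mix[OF col])

lemma rho_consts:
  fixes \<rho> :: real
  assumes "0 < \<rho>" "\<rho> < 1"
  defines "e \<equiv> (1 - \<rho>\<^sup>2) / (2 * \<rho>\<^sup>2)"
  shows "e > 0" "(1 + e) * \<rho>\<^sup>2 = (1 + \<rho>\<^sup>2) / 2" "1 + 1 / e = (1 + \<rho>\<^sup>2) / (1 - \<rho>\<^sup>2)"
proof -
  have r2: "0 < \<rho>\<^sup>2" "\<rho>\<^sup>2 < 1" using assms by (auto simp: power_less_one_iff)
  show "e > 0" unfolding e_def using r2 by simp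
  show "(1 + e) * \<rho>\<^sup>2 = (1 + \<rho>\<^sup>2) / 2" unfolding e_def using r2 by (simp add: field_simps)
  show "1 + 1 / e = (1 + \<rho>\<^sup>2) / (1 - \<rho>\<^sup>2)" unfolding e_def using r2 by (simp add: field_simps)
qed

lemma cons_rec_x:
  fixes G :: "nat \<Rightarrow> nat \<Rightarrow> 'a::euclidean_space \<Rightarrow> 'a"
  assumes row: "\<forall>i<N. (\<Sum>j<N. W i j) = 1" and col: "\<forall>j<N. (\<Sum>i<N. W i j) = 1"
    and sn: "spec_norm N (\<lambda>i j. W i j - 1 / real N) = \<rho>" and \<rho>: "0 < \<rho>" "\<rho> < 1"
  shows "cons N (xk G W N \<eta> (Suc k)) \<le> (1 + \<rho>\<^sup>2) / 2 * cons N (xk G W N \<eta> k)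
     + (1 + \<rho>\<^sup>2) / (1 - \<rho>\<^sup>2) * \<eta>\<^sup>2 * cons N (sk G W N \<eta> k)"
proof -
  define e where "e = (1 - \<rho>\<^sup>2) / (2 * \<rho>\<^sup>2)"
  note ec = rho_consts[OF \<rho>, folded e_def]
  have "cons N (xk G W N \<eta> (Suc k)) = cons N (\<lambda>i. mix W N (xk G W N \<eta> k) i + (- \<eta>) *\<^sub>R sk G W N \<eta> k i)"
    unfolding xk_Suc by simp
  also have "\<dots> \<le> (1 + e) * cons N (mix W N (xk G W N \<eta> k)) + (1 + 1 / e) * cons N (\<lambda>i. (- \<eta>) *\<^sub>R sk G W N \<eta> k i)"
    by (rule cons_add[OF ec(1)])
  also have "\<dots> \<le> (1 + e) * (\<rho>\<^sup>2 * cons N (xk G W N \<eta> k)) + (1 + 1 / e) * (\<eta>\<^sup>2 * cons N (sk G W N \<eta> k))"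
    using contraction[OF row col sn] ec(1) unfolding cons_scale by (intro add_mono mult_left_mono) auto
  finally show ?thesis using ec by (simp add: mult.assoc[symmetric])
qed

lemma cons_rec_s:
  fixes G :: "nat \<Rightarrow> nat \<Rightarrow> 'a::euclidean_space \<Rightarrow> 'a"
  assumes row: "\<forall>i<N. (\<Sum>j<N. W i j) = 1" and col: "\<forall>j<N. (\<Sum>i<N. W i j) = 1"
    and sn: "spec_norm N (\<lambda>i j. W i j - 1 / real N) = \<rho>" and \<rho>: "0 < \<rho>" "\<rho> < 1"
  shows "cons N (sk G W N \<eta> (Suc k)) \<le> (1 + \<rho>\<^sup>2) / 2 * cons N (sk G W N \<eta> k)
     + (1 + \<rho>\<^sup>2) / (1 - \<rho>\<^sup>2) * (2 * (\<Sum>i<N. (norm (G (k + 2) i (xk G W N \<eta> (Suc k) i)))\<^sup>2)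
          + 2 * (\<Sum>i<N. (norm (G (k + 1) i (xk G W N \<eta> k i)))\<^sup>2))"
proof -
  define e where "e = (1 - \<rho>\<^sup>2) / (2 * \<rho>\<^sup>2)"
  note ec = rho_consts[OF \<rho>, folded e_def]
  define a where "a i = G (k + 2) i (xk G W N \<eta> (Suc k) i)" for i
  define b where "b i = G (k + 1) i (xk G W N \<eta> k i)" for i
  have "cons N (sk G W N \<eta> (Suc k)) = cons N (\<lambda>i. mix W N (sk G W N \<eta> k) i + (a i - b i))"
    unfolding sk_Suc a_def b_def by (simp add: algebra_simps)
  also have "\<dots> \<le> (1 + e) * cons N (mix W N (sk G W N \<eta> k)) + (1 + 1 / e) * cons N (\<lambda>i. a i - b i)"
    by (rule cons_add[OF ec(1)])
  also have "\<dots> \<le> (1 + e) * (\<rho>\<^sup>2 * cons N (sk G W N \<eta> k)) + (1 + 1 / e) * (2 * (\<Sum>i<N. (norm (a i))\<^sup>2) + 2 * (\<Sum>i<N. (norm (b i))\<^sup>2))"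
  proof (intro add_mono mult_left_mono)
    show "cons N (mix W N (sk G W N \<eta> k)) \<le> \<rho>\<^sup>2 * cons N (sk G W N \<eta> k)" by (rule contraction[OF row col sn])
    have "cons N (\<lambda>i. a i - b i) \<le> (\<Sum>i<N. (norm (a i - b i))\<^sup>2)" by (rule cons_le_sum)
    also have "\<dots> \<le> (\<Sum>i<N. 2 * (norm (a i))\<^sup>2 + 2 * (norm (b i))\<^sup>2)"
      using sq_add_le[of "a i" "- b i" for i] by (intro sum_mono) simp
    also have "\<dots> = 2 * (\<Sum>i<N. (norm (a i))\<^sup>2) + 2 * (\<Sum>i<N. (norm (b i))\<^sup>2)"
      by (simp add: sum.distrib sum_distrib_left)
    finally show "cons N (\<lambda>i. a i - b i) \<le> 2 * (\<Sum>i<N. (norm (a i))\<^sup>2) + 2 * (\<Sum>i<N. (norm (b i))\<^sup>2)" .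
  next
    have "\<rho>\<^sup>2 < 1\<^sup>2" using \<rho> by (intro power_strict_mono) auto
    then show "0 \<le> 1 + 1 / e" using ec by simp
  qed (use ec \<rho> in auto)
  finally show ?thesis using ec unfolding a_def b_def by (simp add: mult.assoc[symmetric])
qed



lemma mean_sq_le:
  fixes v :: "nat \<Rightarrow> 'a::real_inner"
  assumes N: "N \<ge> 1"
  shows "(norm (mean N v))\<^sup>2 \<le> (1 / real N) * (\<Sum>i<N. (norm (v i))\<^sup>2)"
proof -
  define m where "m = mean N v"
  have sv: "(\<Sum>i<N. v i) = real N *\<^sub>R m" unfolding m_def mean_def using N by simp
  have "0 \<le> (\<Sum>i<N. (norm (v i - m))\<^sup>2)" by (simp add: sum_nonneg)
  also have "(\<Sum>i<N. (norm (v i - m))\<^sup>2) = (\<Sum>i<N. (norm (v i))\<^sup>2 - 2 * (v i \<bullet> m) + (norm m)\<^sup>2)"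
    by (intro sum.cong refl) (simp add: power2_norm_eq_inner inner_diff_left inner_diff_right inner_commute)
  also have "\<dots> = (\<Sum>i<N. (norm (v i))\<^sup>2) - 2 * ((\<Sum>i<N. v i) \<bullet> m) + real N * (norm m)\<^sup>2"
    by (simp add: sum.distrib sum_subtractf sum_distrib_left inner_sum_left)
  also have "\<dots> = (\<Sum>i<N. (norm (v i))\<^sup>2) - real N * (norm m)\<^sup>2"
    unfolding sv by (simp add: power2_norm_eq_inner)
  finally have "real N * (norm m)\<^sup>2 \<le> (\<Sum>i<N. (norm (v i))\<^sup>2)" by simp
  then show ?thesis unfolding m_def using N by (simp add: field_simps)
qed

lemma cons_nonneg: "0 \<le> cons N v"
  unfolding cons_def by (simp add: sum_nonneg)

locale run = dsetting P loss g gradF xs L D \<sigma> for P :: "'b measure" and loss and g :: "'b \<Rightarrow> 'a::euclidean_space \<Rightarrow> 'a"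
  and gradF xs L D \<sigma> +
  fixes N T :: nat and W :: "nat \<Rightarrow> nat \<Rightarrow> real" and \<eta> \<rho> :: real
  assumes N1: "N \<ge> 1" and T1: "T \<ge> 1"
    and row: "\<forall>i<N. (\<Sum>j<N. W i j) = 1" and col: "\<forall>j<N. (\<Sum>i<N. W i j) = 1"
    and sn: "spec_norm N (\<lambda>i j. W i j - 1 / real N) = \<rho>" and \<rho>: "0 < \<rho>" "\<rho> < 1"
    and \<eta>_pos: "0 < \<eta>" and \<eta>_small: "8 * \<eta> * L \<le> 1"
begin

definition I :: "(nat \<times> nat) set" where "I = {1..T} \<times> {..<N}"
abbreviation PI where "PI \<equiv> PiM I (\<lambda>_. P)"
definition Gy :: "(nat \<times> nat \<Rightarrow> 'b) \<Rightarrow> nat \<Rightarrow> nat \<Rightarrow> 'a \<Rightarrow> 'a" where "Gy y = (\<lambda>t i x. g (y (t, i)) x)"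
definition X where "X y k = xk (Gy y) W N \<eta> k"
definition S where "S y k = sk (Gy y) W N \<eta> k"

lemma finI: "finite I" unfolding I_def by simp
lemma inI: "(t, i) \<in> I \<longleftrightarrow> 1 \<le> t \<and> t \<le> T \<and> i < N" unfolding I_def by auto

sublocale PIp: prob_space PI by (rule prob_space_PiM) (rule P)

lemma X_upd: "k < t \<Longrightarrow> X (y((t, i) := z)) k = X y k"
  unfolding X_def by (rule xk_cong) (auto simp: Gy_def)
lemma S_upd: "k + 1 < t \<Longrightarrow> S (y((t, i) := z)) k = S y k"
  unfolding S_def by (rule sk_cong) (auto simp: Gy_def)

lemma comp_meas: "(t, i) \<in> I \<Longrightarrow> (\<lambda>y. y (t, i)) \<in> measurable PI P"
  by (rule measurable_component_singleton)

lemma marg_int: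
  fixes f :: "'b \<Rightarrow> real"
  assumes "(t, i) \<in> I" "integrable P f" shows "integrable PI (\<lambda>y. f (y (t, i)))"
  using PiM_marginal(1)[OF P assms(1), of f] assms(2) by auto

lemma marg_eq:
  fixes f :: "'b \<Rightarrow> real"
  assumes "(t, i) \<in> I" "f \<in> borel_measurable P" shows "(\<integral>y. f (y (t, i)) \<partial>PI) = (\<integral>z. f z \<partial>P)"
  using PiM_marginal(2)[OF P assms] .

lemma sqint_g:
  assumes j: "(t, i) \<in> I" and Y: "sqint PI Y"
  shows "sqint PI (\<lambda>y. g (y (t, i)) (Y y))"
proof -
  have Ym: "Y \<in> borel_measurable PI" and Yi: "integrable PI (\<lambda>y. (norm (Y y))\<^sup>2)"
    using Y unfolding sqint_def by auto
  have m: "(\<lambda>y. g (y (t, i)) (Y y)) \<in> borel_measurable PI"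
    by (rule caratheodory_measurable[OF g_cont g_meas comp_meas[OF j] Ym])
  have i0: "integrable PI (\<lambda>y. (norm (g (y (t, i)) 0))\<^sup>2)"
    by (rule marg_int[OF j D_int])
  have i: "integrable PI (\<lambda>y. 2 * (norm (g (y (t, i)) 0))\<^sup>2 + 2 * L\<^sup>2 * (norm (Y y))\<^sup>2)"
    using i0 Yi by simp
  have "integrable PI (\<lambda>y. (norm (g (y (t, i)) (Y y)))\<^sup>2)"
  proof (rule Bochner_Integration.integrable_bound[OF i])
    show "(\<lambda>y. (norm (g (y (t, i)) (Y y)))\<^sup>2) \<in> borel_measurable PI" using m by measurable
    show "AE y in PI. norm ((norm (g (y (t, i)) (Y y)))\<^sup>2) \<le> norm (2 * (norm (g (y (t, i)) 0))\<^sup>2 + 2 * L\<^sup>2 * (norm (Y y))\<^sup>2)"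
      using g_bound by (intro AE_I2) simp
  qed
  then show ?thesis using m unfolding sqint_def by simp
qed

lemma sqint_Gb:
  assumes Y: "sqint PI Y"
  shows "sqint PI (\<lambda>y. Gb (Y y))"
proof -
  have Ym: "Y \<in> borel_measurable PI" and Yi: "integrable PI (\<lambda>y. (norm (Y y))\<^sup>2)"
    using Y unfolding sqint_def by auto
  have m: "(\<lambda>y. Gb (Y y)) \<in> borel_measurable PI"
    using measurable_comp[OF Ym borel_measurable_continuous_onI[OF Gb_cont]] by (simp add: comp_def)
  have i: "integrable PI (\<lambda>y. 2 * (norm (Gb 0))\<^sup>2 + 2 * L\<^sup>2 * (norm (Y y))\<^sup>2)"
    using Yi by simp
  have "integrable PI (\<lambda>y. (norm (Gb (Y y)))\<^sup>2)"
  proof (rule Bochner_Integration.integrable_bound[OF i])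
    show "(\<lambda>y. (norm (Gb (Y y)))\<^sup>2) \<in> borel_measurable PI" using m by measurable
    show "AE y in PI. norm ((norm (Gb (Y y)))\<^sup>2) \<le> norm (2 * (norm (Gb 0))\<^sup>2 + 2 * L\<^sup>2 * (norm (Y y))\<^sup>2)"
      using Gb_bound by (intro AE_I2) simp
  qed
  then show ?thesis using m unfolding sqint_def by simp
qed

lemma int_loss:
  assumes j: "(t, i) \<in> I" and Y: "sqint PI Y"
  shows "integrable PI (\<lambda>y. loss (y (t, i)) (Y y))"
proof -
  have Ym: "Y \<in> borel_measurable PI" and Yi: "integrable PI (\<lambda>y. (norm (Y y))\<^sup>2)"
    using Y unfolding sqint_def by auto
  have m: "(\<lambda>y. loss (y (t, i)) (Y y)) \<in> borel_measurable PI"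
    by (rule caratheodory_measurable[OF loss_cont loss_meas comp_meas[OF j] Ym])
  have i0: "integrable PI (\<lambda>y. (norm (g (y (t, i)) 0))\<^sup>2)"
    by (rule marg_int[OF j D_int])
  have i1: "integrable PI (\<lambda>y. \<bar>loss (y (t, i)) 0\<bar>)"
    by (rule marg_int[OF j]) (use loss_int in auto)
  have i: "integrable PI (\<lambda>y. \<bar>loss (y (t, i)) 0\<bar> + (norm (g (y (t, i)) 0))\<^sup>2 + (norm (Y y))\<^sup>2 + L * (norm (Y y))\<^sup>2)"
    using i0 i1 Yi by simp
  show ?thesis
  proof (rule Bochner_Integration.integrable_bound[OF i m])
    show "AE y in PI. norm (loss (y (t, i)) (Y y)) \<le> norm (\<bar>loss (y (t, i)) 0\<bar> + (norm (g (y (t, i)) 0))\<^sup>2 + (norm (Y y))\<^sup>2 + L * (norm (Y y))\<^sup>2)"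
    proof (intro AE_I2)
      fix y
      have "0 \<le> \<bar>loss (y (t, i)) 0\<bar> + (norm (g (y (t, i)) 0))\<^sup>2 + (norm (Y y))\<^sup>2 + L * (norm (Y y))\<^sup>2"
        using L_pos by simp
      then show "norm (loss (y (t, i)) (Y y)) \<le> norm (\<bar>loss (y (t, i)) 0\<bar> + (norm (g (y (t, i)) 0))\<^sup>2 + (norm (Y y))\<^sup>2 + L * (norm (Y y))\<^sup>2)"
        using loss_bound[of "y (t, i)" "Y y"] by simp
    qed
  qed
qed

lemma int_F:
  assumes Y: "sqint PI Y"
  shows "integrable PI (\<lambda>y. F (Y y))"
proof -
  have Ym: "Y \<in> borel_measurable PI" and Yi: "integrable PI (\<lambda>y. (norm (Y y))\<^sup>2)"
    using Y unfolding sqint_def by auto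
  have m: "(\<lambda>y. F (Y y)) \<in> borel_measurable PI"
    using measurable_comp[OF Ym borel_measurable_continuous_onI[OF F_cont]] by (simp add: comp_def)
  have i: "integrable PI (\<lambda>y. \<bar>F 0\<bar> + (norm (Gb 0))\<^sup>2 + (norm (Y y))\<^sup>2 + L * (norm (Y y))\<^sup>2)"
    using Yi by simp
  show ?thesis
  proof (rule Bochner_Integration.integrable_bound[OF i m])
    show "AE y in PI. norm (F (Y y)) \<le> norm (\<bar>F 0\<bar> + (norm (Gb 0))\<^sup>2 + (norm (Y y))\<^sup>2 + L * (norm (Y y))\<^sup>2)"
    proof (intro AE_I2)
      fix y
      have "0 \<le> \<bar>F 0\<bar> + (norm (Gb 0))\<^sup>2 + (norm (Y y))\<^sup>2 + L * (norm (Y y))\<^sup>2"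
        using L_pos by simp
      then show "norm (F (Y y)) \<le> norm (\<bar>F 0\<bar> + (norm (Gb 0))\<^sup>2 + (norm (Y y))\<^sup>2 + L * (norm (Y y))\<^sup>2)"
        using F_bound[of "Y y"] by simp
    qed
  qed
qed

lemma sqint_XS:
  "(k \<le> T \<longrightarrow> (\<forall>i<N. sqint PI (\<lambda>y. X y k i))) \<and> (k < T \<longrightarrow> (\<forall>i<N. sqint PI (\<lambda>y. S y k i)))"
proof (induction k)
  case 0
  have "sqint PI (\<lambda>y. X y 0 i)" for i
    unfolding X_def xk_0 by (rule PIp.sqint_const)
  moreover have "sqint PI (\<lambda>y. S y 0 i)" if "i < N" for i
  proof -
    have "sqint PI (\<lambda>y. g (y (1, i)) ((\<lambda>_. 0) y))"
      using that T1 by (intro sqint_g PIp.sqint_const) (auto simp: inI)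
    then show ?thesis unfolding S_def sk_0 Gy_def by simp
  qed
  ultimately show ?case by auto
next
  case (Suc k)
  have X1: "sqint PI (\<lambda>y. X y (Suc k) i)" if k: "Suc k \<le> T" and i: "i < N" for i
  proof -
    have "sqint PI (\<lambda>y. mix W N (X y k) i - \<eta> *\<^sub>R S y k i)"
      unfolding mix_def using Suc.IH k i
      by (intro PIp.sqint_diff PIp.sqint_sum PIp.sqint_scale) auto
    then show ?thesis unfolding X_def S_def xk_Suc by simp
  qed
  moreover have "sqint PI (\<lambda>y. S y (Suc k) i)" if k: "Suc k < T" and i: "i < N" for i
  proof -
    have "sqint PI (\<lambda>y. mix W N (S y k) i + g (y (k + 2, i)) (X y (Suc k) i) - g (y (k + 1, i)) (X y k i))"
      unfolding mix_def using Suc.IH k i X1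
      by (intro PIp.sqint_diff PIp.sqint_add PIp.sqint_sum PIp.sqint_scale sqint_g) (auto simp: inI)
    then show ?thesis unfolding X_def S_def sk_Suc Gy_def by simp
  qed
  ultimately show ?case by auto
qed

lemma sqX: "k \<le> T \<Longrightarrow> i < N \<Longrightarrow> sqint PI (\<lambda>y. X y k i)" using sqint_XS by auto
lemma sqS: "k < T \<Longrightarrow> i < N \<Longrightarrow> sqint PI (\<lambda>y. S y k i)" using sqint_XS by auto

end



context run
begin

definition gi where "gi y k i = g (y (k + 1, i)) (X y k i)"
definition dl where "dl y k i = gi y k i - Gb (X y k i)"

lemma sq_gi: "k < T \<Longrightarrow> i < N \<Longrightarrow> sqint PI (\<lambda>y. gi y k i)"
  unfolding gi_def by (intro sqint_g sqX) (auto simp: inI)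
lemma sq_Gbi: "k \<le> T \<Longrightarrow> i < N \<Longrightarrow> sqint PI (\<lambda>y. Gb (X y k i))"
  by (intro sqint_Gb sqX)
lemma sq_dl: "k < T \<Longrightarrow> i < N \<Longrightarrow> sqint PI (\<lambda>y. dl y k i)"
  unfolding dl_def by (intro PIp.sqint_diff sq_gi sq_Gbi) auto

lemma sq_mean:
  fixes v :: "_ \<Rightarrow> nat \<Rightarrow> 'c::euclidean_space"
  assumes "\<And>i. i < N \<Longrightarrow> sqint PI (\<lambda>y. v y i)"
  shows "sqint PI (\<lambda>y. mean N (v y))"
proof -
  have "sqint PI (\<lambda>y. \<Sum>i<N. v y i)" using PIp.sqint_sum[of "{..<N}" "\<lambda>i y. v y i"] assms by simp
  then show ?thesis unfolding mean_def by (rule PIp.sqint_scale)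
qed

lemma int_cons:
  fixes v :: "_ \<Rightarrow> nat \<Rightarrow> 'c::euclidean_space"
  assumes "\<And>i. i < N \<Longrightarrow> sqint PI (\<lambda>y. v y i)"
  shows "integrable PI (\<lambda>y. cons N (v y))"
  unfolding cons_def
proof (rule Bochner_Integration.integrable_sum)
  fix i assume "i \<in> {..<N}"
  then have "sqint PI (\<lambda>y. v y i - mean N (v y))"
    using PIp.sqint_diff[OF assms sq_mean[OF assms]] by simp
  then show "integrable PI (\<lambda>y. (norm (v y i - mean N (v y)))\<^sup>2)" by (rule PIp.sqint_sq)
qed

lemma int_sumsq:
  fixes v :: "_ \<Rightarrow> nat \<Rightarrow> 'c::euclidean_space"
  assumes "\<And>i. i < N \<Longrightarrow> sqint PI (\<lambda>y. v y i)"
  shows "integrable PI (\<lambda>y. \<Sum>i<N. (norm (v y i))\<^sup>2)"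
  using assms by (intro Bochner_Integration.integrable_sum PIp.sqint_sq) auto

lemma E_loss: "k < T \<Longrightarrow> i < N \<Longrightarrow> (\<integral>y. loss (y (k + 1, i)) (X y k i) \<partial>PI) = (\<integral>y. F (X y k i) \<partial>PI)"
proof -
  assume k: "k < T" and i: "i < N"
  have H: "\<And>x. (\<integral>z. loss z x \<partial>P) = F x" by (simp add: F_def)
  show ?thesis
    by (rule prod_indep_eq[OF P finI, where h=loss and X="\<lambda>y. X y k i" and H=F, OF _ _ H])
       (use k i in \<open>auto simp: inI X_upd intro!: int_loss int_F sqX\<close>)
qed

lemma E_loss_xs: "(t, i) \<in> I \<Longrightarrow> (\<integral>y. loss (y (t, i)) xs \<partial>PI) = F xs"
  unfolding F_def by (rule marg_eq) (auto intro: loss_meas)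

lemma E_gi_sq: "k < T \<Longrightarrow> i < N \<Longrightarrow> (\<integral>y. (norm (gi y k i))\<^sup>2 \<partial>PI) \<le> D"
  unfolding gi_def
  by (rule prod_indep_le[OF P finI, where h="\<lambda>z x. (norm (g z x))\<^sup>2" and X="\<lambda>y. X y k i"])
     (auto simp: inI X_upd D_nonneg intro!: D_bound PIp.sqint_sq sqint_g sqX)

lemma E_dl_sq: "k < T \<Longrightarrow> i < N \<Longrightarrow> (\<integral>y. (norm (dl y k i))\<^sup>2 \<partial>PI) \<le> \<sigma>\<^sup>2"
  unfolding dl_def gi_def
  by (rule prod_indep_le[OF P finI, where h="\<lambda>z x. (norm (g z x - Gb x))\<^sup>2" and X="\<lambda>y. X y k i"])
     (auto simp: inI X_upd intro!: var_bound' PIp.sqint_sq PIp.sqint_diff sqint_g sqX sqint_Gb)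

lemma E_gi_inner:
  assumes k: "k < T" and i: "i < N" and Y: "sqint PI Yv" and Yu: "\<And>y z. Yv (y((k + 1, i) := z)) = Yv y"
  shows "(\<integral>y. gi y k i \<bullet> Yv y \<partial>PI) = (\<integral>y. Gb (X y k i) \<bullet> Yv y \<partial>PI)"
proof -
  have "(\<integral>y. (\<lambda>z p. g z (fst p) \<bullet> snd p) (y (k + 1, i)) ((\<lambda>y. (X y k i, Yv y)) y) \<partial>PI)
      = (\<integral>y. (\<lambda>p. Gb (fst p) \<bullet> snd p) ((\<lambda>y. (X y k i, Yv y)) y) \<partial>PI)"
  proof (rule prod_indep_eq[OF P finI])
    show "(k + 1, i) \<in> I" using k i by (auto simp: inI)
    have Yu': "\<And>y z. Yv (y((Suc k, i) := z)) = Yv y" using Yu by simp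
    show "\<And>y z. (X (y((k + 1, i) := z)) k i, Yv (y((k + 1, i) := z))) = (X y k i, Yv y)"
      by (simp add: X_upd Yu')
    show "\<And>p. (\<integral>z. g z (fst p) \<bullet> snd p \<partial>P) = Gb (fst p) \<bullet> snd p"
      unfolding Gb_def using g_int by simp
    show "integrable PI (\<lambda>y. g (y (k + 1, i)) (fst (X y k i, Yv y)) \<bullet> snd (X y k i, Yv y))"
      using sq_gi[OF k i] Y unfolding gi_def by (simp add: PIp.sqint_inner)
    show "integrable PI (\<lambda>y. Gb (fst (X y k i, Yv y)) \<bullet> snd (X y k i, Yv y))"
      using sq_Gbi[of k i] k i Y by (simp add: PIp.sqint_inner)
  qed
  then show ?thesis unfolding gi_def by simp
qed

lemma E_dl_inner:
  assumes k: "k < T" and i: "i < N" and Y: "sqint PI Yv" and Yu: "\<And>y z. Yv (y((k + 1, i) := z)) = Yv y"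
  shows "(\<integral>y. dl y k i \<bullet> Yv y \<partial>PI) = 0"
proof -
  have "(\<integral>y. dl y k i \<bullet> Yv y \<partial>PI) = (\<integral>y. gi y k i \<bullet> Yv y - Gb (X y k i) \<bullet> Yv y \<partial>PI)"
    unfolding dl_def by (simp add: inner_diff_left)
  also have "\<dots> = (\<integral>y. gi y k i \<bullet> Yv y \<partial>PI) - (\<integral>y. Gb (X y k i) \<bullet> Yv y \<partial>PI)"
    using sq_gi[OF k i] sq_Gbi[of k i] k i Y by (intro Bochner_Integration.integral_diff PIp.sqint_inner) auto
  also have "\<dots> = 0" using E_gi_inner[OF assms] by simp
  finally show ?thesis .
qed

lemma E_dl_cross:
  assumes k: "k < T" and i: "i < N" and j: "j < N" and ij: "i \<noteq> j"
  shows "(\<integral>y. dl y k i \<bullet> dl y k j \<partial>PI) = 0"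
proof (rule E_dl_inner[OF k i sq_dl[OF k j]])
  fix y z
  show "dl (y((k + 1, i) := z)) k j = dl y k j"
    unfolding dl_def gi_def using ij by (simp add: X_upd)
qed

lemma E_mean_dl: assumes k: "k < T"
  shows "(\<integral>y. (norm (mean N (dl y k)))\<^sup>2 \<partial>PI) \<le> \<sigma>\<^sup>2 / real N"
proof -
  have e: "(norm (mean N (dl y k)))\<^sup>2 = (1 / real N)\<^sup>2 * (\<Sum>i<N. \<Sum>j<N. dl y k i \<bullet> dl y k j)" for y
  proof -
    have "(norm (mean N (dl y k)))\<^sup>2 = (1 / real N)\<^sup>2 * ((\<Sum>i<N. dl y k i) \<bullet> (\<Sum>j<N. dl y k j))"
      unfolding mean_def power2_norm_eq_inner by (simp add: power2_eq_square)
    also have "(\<Sum>i<N. dl y k i) \<bullet> (\<Sum>j<N. dl y k j) = (\<Sum>i<N. \<Sum>j<N. dl y k i \<bullet> dl y k j)"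
      by (simp add: inner_sum_left inner_sum_right) (rule sum.swap)
    finally show ?thesis .
  qed
  have ii: "\<And>i j. i < N \<Longrightarrow> j < N \<Longrightarrow> integrable PI (\<lambda>y. dl y k i \<bullet> dl y k j)"
    using k by (intro PIp.sqint_inner sq_dl) auto
  have "(\<integral>y. (norm (mean N (dl y k)))\<^sup>2 \<partial>PI) = (1 / real N)\<^sup>2 * (\<Sum>i<N. \<Sum>j<N. (\<integral>y. dl y k i \<bullet> dl y k j \<partial>PI))"
  proof -
    have "(\<integral>y. (\<Sum>i<N. \<Sum>j<N. dl y k i \<bullet> dl y k j) \<partial>PI) = (\<Sum>i<N. (\<integral>y. (\<Sum>j<N. dl y k i \<bullet> dl y k j) \<partial>PI))"
      using ii by (intro Bochner_Integration.integral_sum Bochner_Integration.integrable_sum) auto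
    also have "\<dots> = (\<Sum>i<N. \<Sum>j<N. (\<integral>y. dl y k i \<bullet> dl y k j \<partial>PI))"
      using ii by (intro sum.cong refl Bochner_Integration.integral_sum) auto
    finally show ?thesis unfolding e by simp
  qed
  also have "\<dots> = (1 / real N)\<^sup>2 * (\<Sum>i<N. (\<integral>y. (norm (dl y k i))\<^sup>2 \<partial>PI))"
  proof -
    have "(\<Sum>j<N. (\<integral>y. dl y k i \<bullet> dl y k j \<partial>PI)) = (\<integral>y. (norm (dl y k i))\<^sup>2 \<partial>PI)" if i: "i < N" for i
    proof -
      have "(\<Sum>j<N. (\<integral>y. dl y k i \<bullet> dl y k j \<partial>PI)) = (\<Sum>j<N. if j = i then (\<integral>y. (norm (dl y k i))\<^sup>2 \<partial>PI) else 0)"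
        using E_dl_cross[OF k i] by (intro sum.cong refl) (auto simp: power2_norm_eq_inner)
      also have "\<dots> = (\<integral>y. (norm (dl y k i))\<^sup>2 \<partial>PI)" using i by simp
      finally show ?thesis .
    qed
    then show ?thesis by simp
  qed
  also have "\<dots> \<le> (1 / real N)\<^sup>2 * (\<Sum>i<N. \<sigma>\<^sup>2)"
    using E_dl_sq[OF k] by (intro mult_left_mono sum_mono) auto
  also have "\<dots> = \<sigma>\<^sup>2 / real N" using N1 by (simp add: power2_eq_square field_simps)
  finally show ?thesis .
qed

definition qq where "qq = (1 + \<rho>\<^sup>2) / 2"
definition cc where "cc = (1 + \<rho>\<^sup>2) / (1 - \<rho>\<^sup>2)"
definition BB where "BB = real N * D * (1 + 4 * cc / (1 - qq))"

lemma cstq: "0 < qq" "qq < 1" "0 < cc" "0 \<le> BB"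
proof -
  have r: "0 < \<rho>\<^sup>2" "\<rho>\<^sup>2 < 1" using \<rho> power_strict_mono[of \<rho> 1 2] by auto
  have "0 \<le> \<rho>\<^sup>2" by simp
  then have p: "0 < 1 + \<rho>\<^sup>2" by linarith
  show "0 < qq" "qq < 1" unfolding qq_def using r p by auto
  show c: "0 < cc" unfolding cc_def using r p by (intro divide_pos_pos) auto
  have "0 < 1 - qq" unfolding qq_def using r by auto
  then have "0 \<le> 1 + 4 * cc / (1 - qq)" using c by simp
  then show "0 \<le> BB" unfolding BB_def using D_nonneg by simp
qed

definition Ag where "Ag y k = (\<Sum>i<N. (norm (gi y k i))\<^sup>2)"

lemma Cx_rec: "cons N (X y (Suc k)) \<le> qq * cons N (X y k) + cc * \<eta>\<^sup>2 * cons N (S y k)"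
  unfolding X_def S_def qq_def cc_def by (rule cons_rec_x[OF row col sn \<rho>])

lemma Cs_rec: "cons N (S y (Suc k)) \<le> qq * cons N (S y k) + cc * (2 * Ag y (Suc k) + 2 * Ag y k)"
  using cons_rec_s[OF row col sn \<rho>, of "Gy y" \<eta> k]
  unfolding X_def S_def qq_def cc_def Ag_def gi_def by (simp add: Gy_def X_def)

lemma Cx_0: "cons N (X y 0) = 0"
  unfolding X_def xk_0 cons_def mean_def by simp

lemma Cs_0: "cons N (S y 0) \<le> Ag y 0"
  using cons_le_sum[of N "S y 0"] unfolding Ag_def gi_def S_def X_def sk_0 xk_0 Gy_def by simp

lemma int_Ag: "k < T \<Longrightarrow> integrable PI (\<lambda>y. Ag y k)"
  unfolding Ag_def by (intro int_sumsq sq_gi) auto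

lemma E_Ag: "k < T \<Longrightarrow> (\<integral>y. Ag y k \<partial>PI) \<le> real N * D"
proof -
  assume k: "k < T"
  have "(\<integral>y. Ag y k \<partial>PI) = (\<Sum>i<N. (\<integral>y. (norm (gi y k i))\<^sup>2 \<partial>PI))"
    unfolding Ag_def using k by (intro Bochner_Integration.integral_sum PIp.sqint_sq sq_gi) auto
  also have "\<dots> \<le> (\<Sum>i<N. D)" using E_gi_sq k by (intro sum_mono) auto
  finally show ?thesis by simp
qed

lemma int_CS: "k < T \<Longrightarrow> integrable PI (\<lambda>y. cons N (S y k))"
  by (intro int_cons sqS) auto
lemma int_CX: "k \<le> T \<Longrightarrow> integrable PI (\<lambda>y. cons N (X y k))"
  by (intro int_cons sqX) auto

lemma E_Cs: "k < T \<Longrightarrow> (\<integral>y. cons N (S y k) \<partial>PI) \<le> BB"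
proof (induction k)
  case 0
  have "(\<integral>y. cons N (S y 0) \<partial>PI) \<le> (\<integral>y. Ag y 0 \<partial>PI)"
    using 0 by (intro integral_mono int_CS int_Ag Cs_0) auto
  also have "\<dots> \<le> real N * D" using 0 by (rule E_Ag)
  also have "\<dots> \<le> BB"
  proof -
    have "1 \<le> 1 + 4 * cc / (1 - qq)" using cstq by simp
    from mult_left_mono[OF this, of "real N * D"] show ?thesis unfolding BB_def using D_nonneg by simp
  qed
  finally show ?case .
next
  case (Suc k)
  then have k: "k < T" by simp
  have "(\<integral>y. cons N (S y (Suc k)) \<partial>PI) \<le> (\<integral>y. qq * cons N (S y k) + cc * (2 * Ag y (Suc k) + 2 * Ag y k) \<partial>PI)"
  proof (rule integral_mono)
    show "integrable PI (\<lambda>y. qq * cons N (S y k) + cc * (2 * Ag y (Suc k) + 2 * Ag y k))"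
      using int_CS[OF k] int_Ag[OF k] int_Ag[OF Suc.prems] by simp
  qed (use Suc.prems k int_CS Cs_rec in auto)
  also have "\<dots> = qq * (\<integral>y. cons N (S y k) \<partial>PI) + cc * (2 * (\<integral>y. Ag y (Suc k) \<partial>PI) + 2 * (\<integral>y. Ag y k \<partial>PI))"
    using Suc.prems k int_CS[OF k] int_Ag[OF k] int_Ag[OF Suc.prems] by simp
  also have "\<dots> \<le> qq * BB + cc * (2 * (real N * D) + 2 * (real N * D))"
    using Suc.IH[OF k] E_Ag[OF k] E_Ag[OF Suc.prems] cstq
    by (intro add_mono mult_left_mono) auto
  also have "\<dots> \<le> BB"
  proof -
    have "qq * BB + cc * (2 * (real N * D) + 2 * (real N * D)) = BB - (1 - qq) * (real N * D)"
      unfolding BB_def using cstq by (simp add: field_simps)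
    moreover have "0 \<le> (1 - qq) * (real N * D)" using cstq D_nonneg by simp
    ultimately show ?thesis by linarith
  qed
  finally show ?case .
qed

definition KK where "KK = cc * \<eta>\<^sup>2 * BB / (1 - qq)"

lemma E_Cx: "k < T \<Longrightarrow> (\<integral>y. cons N (X y k) \<partial>PI) \<le> KK"
proof (induction k)
  case 0
  show ?case unfolding Cx_0 KK_def using cstq by simp
next
  case (Suc k)
  then have k: "k < T" by simp
  have "(\<integral>y. cons N (X y (Suc k)) \<partial>PI) \<le> (\<integral>y. qq * cons N (X y k) + cc * \<eta>\<^sup>2 * cons N (S y k) \<partial>PI)"
  proof (rule integral_mono)
    show "integrable PI (\<lambda>y. qq * cons N (X y k) + cc * \<eta>\<^sup>2 * cons N (S y k))"
      using int_CX[of k] int_CS[OF k] k by simp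
  qed (use Suc.prems k int_CX Cx_rec in auto)
  also have "\<dots> = qq * (\<integral>y. cons N (X y k) \<partial>PI) + cc * \<eta>\<^sup>2 * (\<integral>y. cons N (S y k) \<partial>PI)"
    using int_CX[of k] int_CS[OF k] k by simp
  also have "\<dots> \<le> qq * KK + cc * \<eta>\<^sup>2 * BB"
    using Suc.IH[OF k] E_Cs[OF k] cstq by (intro add_mono mult_left_mono) auto
  also have "\<dots> = KK"
    unfolding KK_def using cstq by (simp add: field_simps)
  finally show ?case .
qed

end



context run
begin

definition xb where "xb y k = mean N (X y k)"
definition ee where "ee y k = (norm (xb y k - xs))\<^sup>2"
definition Phi where "Phi y k = (\<Sum>i<N. F (X y k i) - F xs)"

lemma F_min: "F xs \<le> F x" using xs_min unfolding F_def by blast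

lemma Phi_nonneg: "0 \<le> Phi y k"
  unfolding Phi_def using F_min by (intro sum_nonneg) auto

lemma gi_split: "gi y k i = dl y k i + Gb (X y k i)" unfolding dl_def by simp

lemma xb_Suc: "xb y (Suc k) = xb y k - \<eta> *\<^sub>R mean N (gi y k)"
proof -
  have "mean N (S y k) = mean N (gi y k)"
    unfolding S_def X_def using tracking[OF col, of "Gy y" \<eta> k] unfolding gi_def X_def Gy_def by simp
  then show ?thesis unfolding xb_def X_def using mean_xk_Suc[OF col, of "Gy y" \<eta> k] by (simp add: S_def)
qed

lemma sum_Gb_lower:
  "(\<Sum>i<N. Gb (X y k i) \<bullet> (xb y k - xs)) \<ge> Phi y k - L * cons N (X y k)"
proof -
  define m where "m = xb y k"
  define x where "x i = X y k i" for i
  have sx: "(\<Sum>i<N. x i) = real N *\<^sub>R m" unfolding m_def xb_def mean_def x_def using N1 by simp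
  have t1: "Gb (x i) \<bullet> (x i - xs) \<ge> F (x i) - F xs" for i
    using F_lower[where x="x i" and y=xs] by (simp add: inner_diff_right)
  have t2: "(Gb (x i) - Gb m) \<bullet> (m - x i) \<ge> - L * (norm (x i - m))\<^sup>2" for i
  proof -
    have "\<bar>(Gb (x i) - Gb m) \<bullet> (m - x i)\<bar> \<le> norm (Gb (x i) - Gb m) * norm (m - x i)"
      by (rule Cauchy_Schwarz_ineq2)
    also have "\<dots> \<le> (L * norm (x i - m)) * norm (m - x i)"
      by (intro mult_right_mono Gb_lip) auto
    also have "\<dots> = L * (norm (x i - m))\<^sup>2" by (simp add: norm_minus_commute power2_eq_square)
    finally show ?thesis by linarith
  qed
  have s0: "(\<Sum>i<N. Gb m \<bullet> (m - x i)) = 0"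
    by (simp add: inner_diff_right sum_subtractf inner_sum_right[symmetric] sx)
  have "(\<Sum>i<N. Gb (x i) \<bullet> (m - xs)) = (\<Sum>i<N. Gb (x i) \<bullet> (x i - xs)) + (\<Sum>i<N. (Gb (x i) - Gb m) \<bullet> (m - x i)) + (\<Sum>i<N. Gb m \<bullet> (m - x i))"
    by (simp add: sum.distrib[symmetric] inner_diff_left inner_diff_right algebra_simps)
  also have "\<dots> \<ge> (\<Sum>i<N. F (x i) - F xs) + (\<Sum>i<N. - L * (norm (x i - m))\<^sup>2) + 0"
    unfolding s0 by (intro add_mono sum_mono t1 t2) auto
  finally show ?thesis
    unfolding Phi_def cons_def x_def m_def xb_def by (simp add: sum_negf sum_distrib_left)
qed

lemma ee_pointwise:
  "ee y (Suc k) \<le> ee y k - (2 * \<eta> / real N) * (\<Sum>i<N. gi y k i \<bullet> (xb y k - xs))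
     + 2 * \<eta>\<^sup>2 * (norm (mean N (dl y k)))\<^sup>2 + (8 * \<eta>\<^sup>2 * L / real N) * Phi y k"
proof -
  define w where "w = xb y k - xs"
  define a where "a = mean N (gi y k)"
  have "ee y (Suc k) = (norm (w - \<eta> *\<^sub>R a))\<^sup>2" unfolding ee_def xb_Suc w_def a_def by (simp add: algebra_simps)
  also have "\<dots> = (norm w)\<^sup>2 - 2 * \<eta> * (a \<bullet> w) + \<eta>\<^sup>2 * (norm a)\<^sup>2"
    unfolding power2_norm_eq_inner
    by (simp add: inner_diff_left inner_diff_right inner_commute power2_eq_square algebra_simps)
  also have "a \<bullet> w = (1 / real N) * (\<Sum>i<N. gi y k i \<bullet> w)"
    unfolding a_def mean_def by (simp add: inner_sum_left)
  also have "(norm a)\<^sup>2 \<le> 2 * (norm (mean N (dl y k)))\<^sup>2 + (8 * L / real N) * Phi y k"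
  proof -
    have "a = mean N (dl y k) + mean N (\<lambda>i. Gb (X y k i))"
    proof -
      have "mean N (gi y k) = mean N (\<lambda>i. dl y k i + Gb (X y k i))"
        by (rule mean_cong) (simp add: gi_split)
      then show ?thesis unfolding a_def by (simp add: mean_add)
    qed
    then have h1: "(norm a)\<^sup>2 \<le> 2 * (norm (mean N (dl y k)))\<^sup>2 + 2 * (norm (mean N (\<lambda>i. Gb (X y k i))))\<^sup>2"
      using sq_add_le by simp
    have h2: "(norm (mean N (\<lambda>i. Gb (X y k i))))\<^sup>2 \<le> (1 / real N) * (\<Sum>i<N. (norm (Gb (X y k i)))\<^sup>2)"
      by (rule mean_sq_le[OF N1])
    have "(\<Sum>i<N. (norm (Gb (X y k i)))\<^sup>2) \<le> (\<Sum>i<N. 4 * L * (F (X y k i) - F xs))"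
      by (intro sum_mono Gb_sq)
    also have "\<dots> = 4 * L * Phi y k" unfolding Phi_def by (simp add: sum_distrib_left)
    finally have h3: "(\<Sum>i<N. (norm (Gb (X y k i)))\<^sup>2) \<le> 4 * L * Phi y k" .
    have h4: "(1 / real N) * (\<Sum>i<N. (norm (Gb (X y k i)))\<^sup>2) \<le> (1 / real N) * (4 * L * Phi y k)"
      using h3 by (intro mult_left_mono) auto
    have h5: "2 * ((1 / real N) * (4 * L * Phi y k)) = (8 * L / real N) * Phi y k" by simp
    show ?thesis using h1 h2 h4 h5 by linarith
  qed
  finally have "ee y (Suc k) \<le> (norm w)\<^sup>2 - 2 * \<eta> * ((1 / real N) * (\<Sum>i<N. gi y k i \<bullet> w))
      + \<eta>\<^sup>2 * (2 * (norm (mean N (dl y k)))\<^sup>2 + (8 * L / real N) * Phi y k)"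
    by (simp add: mult_left_mono)
  then show ?thesis unfolding ee_def w_def by (simp add: field_simps)
qed

lemma sq_xb: "k \<le> T \<Longrightarrow> sqint PI (\<lambda>y. xb y k - xs)"
proof -
  assume k: "k \<le> T"
  have a: "sqint PI (\<lambda>y. mean N (X y k))" by (rule sq_mean) (rule sqX, use k in auto)
  have b: "sqint PI (\<lambda>y. xs)" by (rule PIp.sqint_const)
  show ?thesis unfolding xb_def by (rule PIp.sqint_diff[OF a b])
qed

lemma int_ee: "k \<le> T \<Longrightarrow> integrable PI (\<lambda>y. ee y k)"
  unfolding ee_def by (intro PIp.sqint_sq sq_xb)

lemma int_Phi: "k \<le> T \<Longrightarrow> integrable PI (\<lambda>y. Phi y k)"
  unfolding Phi_def
proof (intro Bochner_Integration.integrable_sum Bochner_Integration.integrable_diff)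
  fix i assume "k \<le> T" "i \<in> {..<N}"
  then show "integrable PI (\<lambda>y. F (X y k i))" by (intro int_F sqX) auto
qed simp

lemma int_gw: "k < T \<Longrightarrow> i < N \<Longrightarrow> integrable PI (\<lambda>y. gi y k i \<bullet> (xb y k - xs))"
  by (intro PIp.sqint_inner sq_gi sq_xb) auto
lemma int_Gw: "k < T \<Longrightarrow> i < N \<Longrightarrow> integrable PI (\<lambda>y. Gb (X y k i) \<bullet> (xb y k - xs))"
  by (intro PIp.sqint_inner sq_Gbi sq_xb) auto
lemma int_mdl: "k < T \<Longrightarrow> integrable PI (\<lambda>y. (norm (mean N (dl y k)))\<^sup>2)"
  by (intro PIp.sqint_sq sq_mean sq_dl) auto

lemma xb_upd: "k < t \<Longrightarrow> xb (y((t, i) := z)) k = xb y k"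
  unfolding xb_def by (simp add: X_upd)

lemma descent:
  assumes k: "k < T"
  shows "(\<integral>y. ee y (Suc k) \<partial>PI) + (\<eta> / real N) * (\<integral>y. Phi y k \<partial>PI)
     \<le> (\<integral>y. ee y k \<partial>PI) + (2 * \<eta> * L / real N) * KK + 2 * \<eta>\<^sup>2 * \<sigma>\<^sup>2 / real N"
proof -
  have kk: "k \<le> T" "Suc k \<le> T" using k by auto
  define E1 where "E1 = (\<integral>y. ee y k \<partial>PI)"
  define EP where "EP = (\<integral>y. Phi y k \<partial>PI)"
  define EC where "EC = (\<integral>y. cons N (X y k) \<partial>PI)"
  define EG where "EG = (\<Sum>i<N. (\<integral>y. gi y k i \<bullet> (xb y k - xs) \<partial>PI))"
  define EM where "EM = (\<integral>y. (norm (mean N (dl y k)))\<^sup>2 \<partial>PI)"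
  have "(\<integral>y. ee y (Suc k) \<partial>PI) \<le> (\<integral>y. ee y k - (2 * \<eta> / real N) * (\<Sum>i<N. gi y k i \<bullet> (xb y k - xs))
     + 2 * \<eta>\<^sup>2 * (norm (mean N (dl y k)))\<^sup>2 + (8 * \<eta>\<^sup>2 * L / real N) * Phi y k \<partial>PI)"
  proof (rule integral_mono)
    show "integrable PI (\<lambda>y. ee y (Suc k))" by (rule int_ee[OF kk(2)])
    have "integrable PI (\<lambda>y. \<Sum>i<N. gi y k i \<bullet> (xb y k - xs))"
      using int_gw[OF k] by (intro Bochner_Integration.integrable_sum) auto
    then show "integrable PI (\<lambda>y. ee y k - (2 * \<eta> / real N) * (\<Sum>i<N. gi y k i \<bullet> (xb y k - xs))
     + 2 * \<eta>\<^sup>2 * (norm (mean N (dl y k)))\<^sup>2 + (8 * \<eta>\<^sup>2 * L / real N) * Phi y k)"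
      using int_ee[OF kk(1)] int_mdl[OF k] int_Phi[OF kk(1)] by simp
  qed (rule ee_pointwise)
  also have "\<dots> = E1 - (2 * \<eta> / real N) * EG + 2 * \<eta>\<^sup>2 * EM + (8 * \<eta>\<^sup>2 * L / real N) * EP"
  proof -
    have ig: "integrable PI (\<lambda>y. \<Sum>i<N. gi y k i \<bullet> (xb y k - xs))"
      using int_gw[OF k] by (intro Bochner_Integration.integrable_sum) auto
    have "(\<integral>y. (\<Sum>i<N. gi y k i \<bullet> (xb y k - xs)) \<partial>PI) = EG"
      unfolding EG_def using int_gw[OF k] by (intro Bochner_Integration.integral_sum) auto
    then show ?thesis
      unfolding E1_def EM_def EP_def using ig int_ee[OF kk(1)] int_mdl[OF k] int_Phi[OF kk(1)] by simp
  qed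
  finally have A: "(\<integral>y. ee y (Suc k) \<partial>PI) \<le> E1 - (2 * \<eta> / real N) * EG + 2 * \<eta>\<^sup>2 * EM + (8 * \<eta>\<^sup>2 * L / real N) * EP" .
  have EG_ge: "EG \<ge> EP - L * EC"
  proof -
    have "EG = (\<Sum>i<N. (\<integral>y. Gb (X y k i) \<bullet> (xb y k - xs) \<partial>PI))"
      unfolding EG_def
    proof (intro sum.cong refl)
      fix i assume "i \<in> {..<N}"
      then have i: "i < N" by simp
      show "(\<integral>y. gi y k i \<bullet> (xb y k - xs) \<partial>PI) = (\<integral>y. Gb (X y k i) \<bullet> (xb y k - xs) \<partial>PI)"
        by (rule E_gi_inner[OF k i sq_xb[OF kk(1)]]) (simp add: xb_upd)
    qed
    also have "\<dots> = (\<integral>y. (\<Sum>i<N. Gb (X y k i) \<bullet> (xb y k - xs)) \<partial>PI)"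
      using int_Gw[OF k] by (intro Bochner_Integration.integral_sum[symmetric]) auto
    also have "\<dots> \<ge> (\<integral>y. Phi y k - L * cons N (X y k) \<partial>PI)"
    proof (rule integral_mono)
      show "integrable PI (\<lambda>y. Phi y k - L * cons N (X y k))"
        using int_Phi[OF kk(1)] int_CX[OF kk(1)] by simp
      show "integrable PI (\<lambda>y. \<Sum>i<N. Gb (X y k i) \<bullet> (xb y k - xs))"
        using int_Gw[OF k] by (intro Bochner_Integration.integrable_sum) auto
    qed (rule sum_Gb_lower)
    also have "(\<integral>y. Phi y k - L * cons N (X y k) \<partial>PI) = EP - L * EC"
      unfolding EP_def EC_def using int_Phi[OF kk(1)] int_CX[OF kk(1)] by simp
    finally show ?thesis .
  qed
  have EM_le: "EM \<le> \<sigma>\<^sup>2 / real N" unfolding EM_def by (rule E_mean_dl[OF k])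
  have EC_le: "EC \<le> KK" unfolding EC_def by (rule E_Cx[OF k])
  have EP0: "0 \<le> EP" unfolding EP_def by (rule integral_nonneg_AE) (simp add: Phi_nonneg)
  have Np: "0 < real N" using N1 by simp
  have "(2 * \<eta> / real N) * EG \<ge> (2 * \<eta> / real N) * (EP - L * EC)"
    using EG_ge \<eta>_pos Np by (intro mult_left_mono) auto
  moreover have "(8 * \<eta>\<^sup>2 * L / real N) * EP \<le> (\<eta> / real N) * EP"
  proof -
    have "8 * \<eta>\<^sup>2 * L = \<eta> * (8 * \<eta> * L)" by (simp add: power2_eq_square)
    also have "\<dots> \<le> \<eta>" using \<eta>_small \<eta>_pos by (simp add: mult_left_le)
    finally show ?thesis using EP0 Np by (intro mult_right_mono divide_right_mono) auto
  qed
  moreover have "2 * \<eta>\<^sup>2 * EM \<le> 2 * \<eta>\<^sup>2 * (\<sigma>\<^sup>2 / real N)"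
    using EM_le by (intro mult_left_mono) auto
  moreover have "(2 * \<eta> / real N) * (L * EC) \<le> (2 * \<eta> / real N) * (L * KK)"
    using EC_le L_pos \<eta>_pos Np by (intro mult_left_mono) auto
  moreover have "(2 * \<eta> / real N) * (EP - L * EC) = 2 * ((\<eta> / real N) * EP) - (2 * \<eta> / real N) * (L * EC)"
    unfolding right_diff_distrib by simp
  moreover have "(2 * \<eta> / real N) * (L * KK) = (2 * \<eta> * L / real N) * KK" by simp
  moreover have "2 * \<eta>\<^sup>2 * (\<sigma>\<^sup>2 / real N) = 2 * \<eta>\<^sup>2 * \<sigma>\<^sup>2 / real N" by simp
  ultimately show ?thesis using A unfolding E1_def[symmetric] EP_def[symmetric] by linarith
qed

end



definition cstC :: "real \<Rightarrow> real \<Rightarrow> real \<Rightarrow> real \<Rightarrow> 'a::real_normed_vector \<Rightarrow> real" where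
  "cstC L D \<sigma> \<rho> xs = (norm xs)\<^sup>2
     + 2 * L * ((1 + \<rho>\<^sup>2) / (1 - \<rho>\<^sup>2)) * D * (1 + 4 * ((1 + \<rho>\<^sup>2) / (1 - \<rho>\<^sup>2)) / (1 - (1 + \<rho>\<^sup>2) / 2))
        / (1 - (1 + \<rho>\<^sup>2) / 2) + 2 * \<sigma>\<^sup>2"

lemma reindex1: "(\<Sum>k<T. h k) = (\<Sum>t\<in>{1..T}. h (t - 1))" for h :: "nat \<Rightarrow> real"
  by (simp add: sum.atLeast1_atMost_eq)

context run
begin

lemma ee_0: "ee y 0 = (norm xs)\<^sup>2"
  unfolding ee_def xb_def X_def xk_0 mean_def by simp

lemma telescope: "m \<le> T \<Longrightarrow> (\<integral>y. ee y m \<partial>PI) + (\<eta> / real N) * (\<Sum>k<m. (\<integral>y. Phi y k \<partial>PI))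
   \<le> (norm xs)\<^sup>2 + real m * ((2 * \<eta> * L / real N) * KK + 2 * \<eta>\<^sup>2 * \<sigma>\<^sup>2 / real N)"
proof (induction m)
  case 0 then show ?case by (simp add: ee_0 PIp.prob_space)
next
  case (Suc m)
  then have m: "m < T" by simp
  define R where "R = (2 * \<eta> * L / real N) * KK + 2 * \<eta>\<^sup>2 * \<sigma>\<^sup>2 / real N"
  have IH: "(\<integral>y. ee y m \<partial>PI) + (\<eta> / real N) * (\<Sum>k<m. (\<integral>y. Phi y k \<partial>PI)) \<le> (norm xs)\<^sup>2 + real m * R"
    using Suc.IH m unfolding R_def by simp
  have RS: "real (Suc m) * R = real m * R + R" by (simp add: distrib_right)
  have "(\<integral>y. ee y (Suc m) \<partial>PI) + (\<eta> / real N) * (\<Sum>k<Suc m. (\<integral>y. Phi y k \<partial>PI))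
     = ((\<integral>y. ee y (Suc m) \<partial>PI) + (\<eta> / real N) * (\<integral>y. Phi y m \<partial>PI)) + (\<eta> / real N) * (\<Sum>k<m. (\<integral>y. Phi y k \<partial>PI))"
    by (simp add: algebra_simps)
  also have "\<dots> \<le> ((\<integral>y. ee y m \<partial>PI) + (2 * \<eta> * L / real N) * KK + 2 * \<eta>\<^sup>2 * \<sigma>\<^sup>2 / real N)
      + (\<eta> / real N) * (\<Sum>k<m. (\<integral>y. Phi y k \<partial>PI))"
    using descent[OF m] by linarith
  also have "\<dots> \<le> (norm xs)\<^sup>2 + real (Suc m) * ((2 * \<eta> * L / real N) * KK + 2 * \<eta>\<^sup>2 * \<sigma>\<^sup>2 / real N)"
    using IH RS unfolding R_def by linarith
  finally show ?case .
qed

definition RY where "RY y = regret loss g (\<lambda>t i y. y (t, i)) xs W N \<eta> T y"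

lemma RY_eq: "RY y = (1 / real N) * ((\<Sum>i<N. \<Sum>t\<in>{1..T}. loss (y (t, i)) (X y (t - 1) i))
   - (\<Sum>i<N. \<Sum>t\<in>{1..T}. loss (y (t, i)) xs))"
  unfolding RY_def regret_def dogd_x_def X_def xk_def Gy_def by simp

lemma int_loss_X: "t \<in> {1..T} \<Longrightarrow> i < N \<Longrightarrow> integrable PI (\<lambda>y. loss (y (t, i)) (X y (t - 1) i))"
  by (intro int_loss sqX) (auto simp: inI)
lemma int_loss_xs: "t \<in> {1..T} \<Longrightarrow> i < N \<Longrightarrow> integrable PI (\<lambda>y. loss (y (t, i)) xs)"
  using int_loss[of t i "\<lambda>y. xs"] PIp.sqint_const[of xs] by (auto simp: inI)

lemma E_RY: "(\<integral>y. RY y \<partial>PI) = (1 / real N) * (\<Sum>k<T. (\<integral>y. Phi y k \<partial>PI))"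
proof -
  have i1: "integrable PI (\<lambda>y. \<Sum>i<N. \<Sum>t\<in>{1..T}. loss (y (t, i)) (X y (t - 1) i))"
    using int_loss_X by (intro Bochner_Integration.integrable_sum) auto
  have i2: "integrable PI (\<lambda>y. \<Sum>i<N. \<Sum>t\<in>{1..T}. loss (y (t, i)) xs)"
    using int_loss_xs by (intro Bochner_Integration.integrable_sum) auto
  have a: "(\<integral>y. (\<Sum>i<N. \<Sum>t\<in>{1..T}. loss (y (t, i)) (X y (t - 1) i)) \<partial>PI)
      = (\<Sum>i<N. \<Sum>t\<in>{1..T}. (\<integral>y. F (X y (t - 1) i) \<partial>PI))"
  proof -
    have "(\<integral>y. (\<Sum>i<N. \<Sum>t\<in>{1..T}. loss (y (t, i)) (X y (t - 1) i)) \<partial>PI)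
      = (\<Sum>i<N. \<Sum>t\<in>{1..T}. (\<integral>y. loss (y (t, i)) (X y (t - 1) i) \<partial>PI))"
      using int_loss_X
      by (subst Bochner_Integration.integral_sum, force intro!: Bochner_Integration.integrable_sum)
         (intro sum.cong refl Bochner_Integration.integral_sum, auto)
    also have "\<dots> = (\<Sum>i<N. \<Sum>t\<in>{1..T}. (\<integral>y. F (X y (t - 1) i) \<partial>PI))"
    proof (intro sum.cong refl)
      fix i t assume i: "i \<in> {..<N}" and t: "t \<in> {1..T}"
      then have "t - 1 < T" "t - 1 + 1 = t" by auto
      then show "(\<integral>y. loss (y (t, i)) (X y (t - 1) i) \<partial>PI) = (\<integral>y. F (X y (t - 1) i) \<partial>PI)"
        using E_loss[of "t - 1" i] i by simp
    qed
    finally show ?thesis .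
  qed
  have b: "(\<integral>y. (\<Sum>i<N. \<Sum>t\<in>{1..T}. loss (y (t, i)) xs) \<partial>PI) = (\<Sum>i<N. \<Sum>t\<in>{1..T}. F xs)"
  proof -
    have "(\<integral>y. (\<Sum>i<N. \<Sum>t\<in>{1..T}. loss (y (t, i)) xs) \<partial>PI)
      = (\<Sum>i<N. \<Sum>t\<in>{1..T}. (\<integral>y. loss (y (t, i)) xs \<partial>PI))"
      using int_loss_xs
      by (subst Bochner_Integration.integral_sum, force intro!: Bochner_Integration.integrable_sum)
         (intro sum.cong refl Bochner_Integration.integral_sum, auto)
    also have "\<dots> = (\<Sum>i<N. \<Sum>t\<in>{1..T}. F xs)"
      by (intro sum.cong refl E_loss_xs) (auto simp: inI)
    finally show ?thesis .
  qed
  have c: "(\<Sum>k<T. (\<integral>y. Phi y k \<partial>PI)) = (\<Sum>i<N. \<Sum>t\<in>{1..T}. (\<integral>y. F (X y (t - 1) i) \<partial>PI) - F xs)"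
  proof -
    have "(\<Sum>k<T. (\<integral>y. Phi y k \<partial>PI)) = (\<Sum>k<T. \<Sum>i<N. (\<integral>y. F (X y k i) \<partial>PI) - F xs)"
    proof (intro sum.cong refl)
      fix k assume "k \<in> {..<T}"
      then have k: "k \<le> T" by simp
      have "(\<integral>y. Phi y k \<partial>PI) = (\<Sum>i<N. (\<integral>y. F (X y k i) - F xs \<partial>PI))"
        unfolding Phi_def using k int_F[OF sqX]
        by (intro Bochner_Integration.integral_sum Bochner_Integration.integrable_diff) auto
      also have "\<dots> = (\<Sum>i<N. (\<integral>y. F (X y k i) \<partial>PI) - F xs)"
        using k by (intro sum.cong refl) (simp add: int_F sqX PIp.prob_space)
      finally show "(\<integral>y. Phi y k \<partial>PI) = (\<Sum>i<N. (\<integral>y. F (X y k i) \<partial>PI) - F xs)" .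
    qed
    also have "\<dots> = (\<Sum>i<N. \<Sum>k<T. (\<integral>y. F (X y k i) \<partial>PI) - F xs)" by (rule sum.swap)
    also have "\<dots> = (\<Sum>i<N. \<Sum>t\<in>{1..T}. (\<integral>y. F (X y (t - 1) i) \<partial>PI) - F xs)"
      by (intro sum.cong refl reindex1)
    finally show ?thesis .
  qed
  have "(\<integral>y. RY y \<partial>PI) = (1 / real N) * ((\<Sum>i<N. \<Sum>t\<in>{1..T}. (\<integral>y. F (X y (t - 1) i) \<partial>PI)) - (\<Sum>i<N. \<Sum>t\<in>{1..T}. F xs))"
    unfolding RY_eq using i1 i2 a b by simp
  also have "\<dots> = (1 / real N) * (\<Sum>k<T. (\<integral>y. Phi y k \<partial>PI))"
    unfolding c by (simp add: sum_subtractf)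
  finally show ?thesis .
qed

lemma RY_bounds:
  "0 \<le> (\<integral>y. RY y \<partial>PI) \<and>
   (\<integral>y. RY y \<partial>PI) \<le> cstC L D \<sigma> \<rho> xs * (\<eta>\<^sup>2 * real T + \<eta> * real T / real N + 1 / \<eta>)"
proof
  have Np: "0 < real N" using N1 by simp
  have P0: "0 \<le> (\<Sum>k<T. (\<integral>y. Phi y k \<partial>PI))"
    by (intro sum_nonneg integral_nonneg_AE) (simp add: Phi_nonneg)
  show "0 \<le> (\<integral>y. RY y \<partial>PI)" unfolding E_RY using P0 Np by simp
  have eT: "0 \<le> (\<integral>y. ee y T \<partial>PI)" by (rule integral_nonneg_AE) (simp add: ee_def)
  have tel: "(\<eta> / real N) * (\<Sum>k<T. (\<integral>y. Phi y k \<partial>PI))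
      \<le> (norm xs)\<^sup>2 + real T * ((2 * \<eta> * L / real N) * KK + 2 * \<eta>\<^sup>2 * \<sigma>\<^sup>2 / real N)"
    using telescope[of T] eT by simp
  define C1 where "C1 = 2 * L * cc * D * (1 + 4 * cc / (1 - qq)) / (1 - qq)"
  have KKe: "(2 * \<eta> * L / real N) * KK = \<eta> * (\<eta>\<^sup>2 * C1)"
  proof -
    define Z where "Z = 1 + 4 * cc / (1 - qq)"
    have q1: "1 - qq \<noteq> 0" using cstq by simp
    have "(2 * \<eta> * L / real N) * KK = (2 * \<eta> * L / real N) * (cc * \<eta>\<^sup>2 * (real N * D * Z) / (1 - qq))"
      unfolding KK_def BB_def Z_def ..
    also have "\<dots> = \<eta> * (\<eta>\<^sup>2 * (2 * L * cc * D * Z / (1 - qq)))"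
      using Np q1 by (simp add: field_simps)
    finally show ?thesis unfolding C1_def Z_def .
  qed
  have "(1 / real N) * (\<Sum>k<T. (\<integral>y. Phi y k \<partial>PI))
      = (1 / \<eta>) * ((\<eta> / real N) * (\<Sum>k<T. (\<integral>y. Phi y k \<partial>PI)))" using \<eta>_pos by simp
  also have "\<dots> \<le> (1 / \<eta>) * ((norm xs)\<^sup>2 + real T * (\<eta> * (\<eta>\<^sup>2 * C1) + 2 * \<eta>\<^sup>2 * \<sigma>\<^sup>2 / real N))"
    using tel \<eta>_pos unfolding KKe by (intro mult_left_mono) auto
  also have "\<dots> = (norm xs)\<^sup>2 * (1 / \<eta>) + C1 * (\<eta>\<^sup>2 * real T) + (2 * \<sigma>\<^sup>2) * (\<eta> * real T / real N)"
    using \<eta>_pos by (simp add: field_simps power2_eq_square)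
  also have "\<dots> \<le> cstC L D \<sigma> \<rho> xs * (1 / \<eta>) + cstC L D \<sigma> \<rho> xs * (\<eta>\<^sup>2 * real T) + cstC L D \<sigma> \<rho> xs * (\<eta> * real T / real N)"
  proof -
    have C1: "0 \<le> C1" unfolding C1_def using cstq L_pos D_nonneg
      by (intro divide_nonneg_pos mult_nonneg_nonneg) auto
    have cs: "cstC L D \<sigma> \<rho> xs = (norm xs)\<^sup>2 + C1 + 2 * \<sigma>\<^sup>2"
      unfolding cstC_def C1_def cc_def qq_def by simp
    have "(norm xs)\<^sup>2 \<le> cstC L D \<sigma> \<rho> xs" "C1 \<le> cstC L D \<sigma> \<rho> xs" "2 * \<sigma>\<^sup>2 \<le> cstC L D \<sigma> \<rho> xs"
      unfolding cs using C1 by auto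
    then show ?thesis using \<eta>_pos Np
      by (intro add_mono mult_right_mono) auto
  qed
  finally show "(\<integral>y. RY y \<partial>PI) \<le> cstC L D \<sigma> \<rho> xs * (\<eta>\<^sup>2 * real T + \<eta> * real T / real N + 1 / \<eta>)"
    unfolding E_RY by (simp add: algebra_simps)
qed

end



lemma dogd_cong_N:
  assumes "\<And>s i x. 1 \<le> s \<Longrightarrow> s \<le> k + 1 \<Longrightarrow> i < N \<Longrightarrow> G s i x = G' s i x"
  shows "\<forall>i<N. fst (dogd G W N \<eta> k) i = fst (dogd G' W N \<eta> k) i \<and> snd (dogd G W N \<eta> k) i = snd (dogd G' W N \<eta> k) i"
  using assms
proof (induction k)
  case 0 then show ?case by simp
next
  case (Suc k)
  have IH: "\<forall>i<N. fst (dogd G W N \<eta> k) i = fst (dogd G' W N \<eta> k) i \<and> snd (dogd G W N \<eta> k) i = snd (dogd G' W N \<eta> k) i"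
    using Suc.prems by (intro Suc.IH) auto
  have sx: "(\<Sum>j<N. W i j *\<^sub>R fst (dogd G W N \<eta> k) j) = (\<Sum>j<N. W i j *\<^sub>R fst (dogd G' W N \<eta> k) j)" for i
    using IH by (intro sum.cong) auto
  have ss: "(\<Sum>j<N. W i j *\<^sub>R snd (dogd G W N \<eta> k) j) = (\<Sum>j<N. W i j *\<^sub>R snd (dogd G' W N \<eta> k) j)" for i
    using IH by (intro sum.cong) auto
  show ?case
  proof (intro allI impI conjI)
    fix i assume i: "i < N"
    show "fst (dogd G W N \<eta> (Suc k)) i = fst (dogd G' W N \<eta> (Suc k)) i"
      using IH i sx by (simp add: Let_def)
    show "snd (dogd G W N \<eta> (Suc k)) i = snd (dogd G' W N \<eta> (Suc k)) i"
      using IH i sx ss Suc.prems[of "k + 2" i] Suc.prems[of "k + 1" i] by (simp add: Let_def)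
  qed
qed

lemma eta_small:
  assumes L: "L > 0" and \<rho>: "0 < \<rho>" "\<rho> < 1" and e: "\<eta> \<le> eta_max L \<rho> N T" and ep: "0 < \<eta>"
  shows "8 * \<eta> * L \<le> 1"
proof -
  have r: "0 \<le> 1 - \<rho>\<^sup>2" "1 - \<rho>\<^sup>2 \<le> 1" using \<rho> power_strict_mono[of \<rho> 1 2] by auto
  have p: "(1 - \<rho>\<^sup>2) powr 1.5 \<le> 1" using r by (intro powr_le1) auto
  have s: "1 \<le> sqrt (1 + \<rho>\<^sup>2)" by simp
  have "(1 - \<rho>\<^sup>2) powr 1.5 / (32 * L * sqrt (1 + \<rho>\<^sup>2)) \<le> 1 / (32 * L)"
  proof -
    have "(1 - \<rho>\<^sup>2) powr 1.5 / (32 * L * sqrt (1 + \<rho>\<^sup>2)) = ((1 - \<rho>\<^sup>2) powr 1.5 / sqrt (1 + \<rho>\<^sup>2)) / (32 * L)"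
      by simp
    also have "(1 - \<rho>\<^sup>2) powr 1.5 / sqrt (1 + \<rho>\<^sup>2) \<le> 1"
    proof -
      have "(1 - \<rho>\<^sup>2) powr 1.5 \<le> sqrt (1 + \<rho>\<^sup>2)" using p s by linarith
      moreover have "0 < sqrt (1 + \<rho>\<^sup>2)" using s by linarith
      ultimately show ?thesis by (simp add: divide_le_eq_1_pos)
    qed
    finally show ?thesis using L by (simp add: divide_right_mono)
  qed
  then have "\<eta> \<le> 1 / (32 * L)" using e unfolding eta_max_def by simp
  then have "32 * L * \<eta> \<le> 1" using L by (simp add: field_simps)
  moreover have "8 * \<eta> * L = 8 * (L * \<eta>)" "32 * L * \<eta> = 32 * (L * \<eta>)" by simp_all
  moreover have "0 < L * \<eta>" using L ep by simp
  ultimately show ?thesis by linarith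
qed

lemma single_bound:
  fixes M :: "'w measure" and P :: "'b measure"
    and \<xi> :: "nat \<Rightarrow> nat \<Rightarrow> 'w \<Rightarrow> 'b"
    and loss :: "'b \<Rightarrow> 'a::euclidean_space \<Rightarrow> real" and g :: "'b \<Rightarrow> 'a \<Rightarrow> 'a"
    and gradF :: "'a \<Rightarrow> 'a" and xs :: 'a
    and L D \<sigma> \<rho> :: real
  assumes DS: "dsetting P loss g gradF xs L D \<sigma>"
    and M: "prob_space M"
    and \<xi>_meas: "\<And>t i. \<xi> t i \<in> measurable M P"
    and \<xi>_distr: "\<And>t i. distr M P (\<xi> t i) = P"
    and \<xi>_indep: "prob_space.indep_vars M (\<lambda>_. P) (\<lambda>ti. \<xi> (fst ti) (snd ti)) UNIV"
    and \<rho>: "0 < \<rho>" "\<rho> < 1"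
    and NT: "N \<ge> 1" "T \<ge> 1" and gm: "gossip_matrix N W"
    and sn: "spec_norm N (\<lambda>i j. W i j - 1 / real N) = \<rho>"
    and \<eta>: "0 < \<eta>" "\<eta> \<le> eta_max L \<rho> N T"
  shows "0 \<le> expected_regret M loss g \<xi> xs W N \<eta> T \<and>
    expected_regret M loss g \<xi> xs W N \<eta> T \<le> cstC L D \<sigma> \<rho> xs * (\<eta>\<^sup>2 * real T + \<eta> * real T / real N + 1 / \<eta>)"
proof -
  interpret dsetting P loss g gradF xs L D \<sigma> by (rule DS)
  have row: "\<forall>i<N. (\<Sum>j<N. W i j) = 1" and col: "\<forall>j<N. (\<Sum>i<N. W i j) = 1"
    using gm unfolding gossip_matrix_def by auto
  interpret R: run P loss g gradF xs L D \<sigma> N T W \<eta> \<rho>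
    by unfold_locales (use NT row col sn \<rho> \<eta> eta_small[OF L_pos \<rho> \<eta>(2) \<eta>(1)] in auto)
  interpret MM: prob_space M by (rule M)
  define Xi where "Xi \<omega> = (\<lambda>k\<in>R.I. \<xi> (fst k) (snd k) \<omega>)" for \<omega>
  have Xim: "Xi \<in> measurable M R.PI"
    unfolding Xi_def by (intro measurable_restrict \<xi>_meas)
  have dist: "distr M R.PI Xi = R.PI"
  proof -
    have "(1, 0) \<in> R.I" using NT by (simp add: R.inI)
    then have ne: "R.I \<noteq> {}" by auto
    have iv: "MM.indep_vars (\<lambda>_. P) (\<lambda>ti. \<xi> (fst ti) (snd ti)) R.I"
      by (rule MM.indep_vars_subset[OF \<xi>_indep]) simp
    have "distr M (PiM R.I (\<lambda>_. P)) (\<lambda>x. \<lambda>i\<in>R.I. \<xi> (fst i) (snd i) x) = PiM R.I (\<lambda>i. distr M P (\<xi> (fst i) (snd i)))"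
      using MM.indep_vars_iff_distr_eq_PiM'[OF ne, where M'="\<lambda>_. P" and X="\<lambda>ti. \<xi> (fst ti) (snd ti)"] iv \<xi>_meas by simp
    also have "\<dots> = PiM R.I (\<lambda>_. P)" by (simp add: \<xi>_distr)
    finally show ?thesis unfolding Xi_def .
  qed
  have reg: "regret loss g \<xi> xs W N \<eta> T \<omega> = R.RY (Xi \<omega>)" for \<omega>
  proof -
    have d: "dogd_x (\<lambda>t i y. g (\<xi> t i \<omega>) y) W N \<eta> t i = dogd_x (\<lambda>t i y. g (Xi \<omega> (t, i)) y) W N \<eta> t i"
      if t: "t \<in> {1..T}" and i: "i < N" for t i
    proof -
      have "\<forall>i<N. fst (dogd (\<lambda>t i y. g (\<xi> t i \<omega>) y) W N \<eta> (t - 1)) i = fst (dogd (\<lambda>t i y. g (Xi \<omega> (t, i)) y) W N \<eta> (t - 1)) i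
          \<and> snd (dogd (\<lambda>t i y. g (\<xi> t i \<omega>) y) W N \<eta> (t - 1)) i = snd (dogd (\<lambda>t i y. g (Xi \<omega> (t, i)) y) W N \<eta> (t - 1)) i"
        by (rule dogd_cong_N) (use t in \<open>auto simp: Xi_def R.inI\<close>)
      then show ?thesis unfolding dogd_x_def using i by simp
    qed
    have l: "loss (\<xi> t i \<omega>) (dogd_x (\<lambda>t i y. g (\<xi> t i \<omega>) y) W N \<eta> t i)
        = loss (Xi \<omega> (t, i)) (dogd_x (\<lambda>t i y. g (Xi \<omega> (t, i)) y) W N \<eta> t i)"
      if t: "t \<in> {1..T}" and i: "i < N" for t i
      using d[OF t i] t i by (simp add: Xi_def R.inI)
    have l2: "loss (\<xi> t i \<omega>) xs = loss (Xi \<omega> (t, i)) xs" if t: "t \<in> {1..T}" and i: "i < N" for t i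
      using t i by (simp add: Xi_def R.inI)
    show ?thesis unfolding R.RY_def regret_def
      using l l2 by (intro arg_cong2[where f="(*)"] arg_cong2[where f="(-)"] refl sum.cong) auto
  qed
  have RYm: "R.RY \<in> borel_measurable R.PI"
  proof -
    have "integrable R.PI R.RY"
    proof -
      have i1: "integrable R.PI (\<lambda>y. \<Sum>i<N. \<Sum>t\<in>{1..T}. loss (y (t, i)) (R.X y (t - 1) i))"
        using R.int_loss_X by (intro Bochner_Integration.integrable_sum) auto
      have i2: "integrable R.PI (\<lambda>y. \<Sum>i<N. \<Sum>t\<in>{1..T}. loss (y (t, i)) xs)"
        using R.int_loss_xs by (intro Bochner_Integration.integrable_sum) auto
      show ?thesis unfolding R.RY_eq using i1 i2 by simp
    qed
    then show ?thesis by auto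
  qed
  have "expected_regret M loss g \<xi> xs W N \<eta> T = (\<integral>\<omega>. R.RY (Xi \<omega>) \<partial>M)"
    unfolding expected_regret_def reg ..
  also have "\<dots> = (\<integral>y. R.RY y \<partial>distr M R.PI Xi)"
    by (rule integral_distr[symmetric, OF Xim RYm])
  also have "\<dots> = (\<integral>y. R.RY y \<partial>R.PI)" unfolding dist ..
  finally show ?thesis using R.RY_bounds by simp
qed



lemma asym_arith:
  fixes N T a L C \<eta> :: real
  assumes N: "N \<ge> 1" and T: "N ^ 3 \<le> T" and a: "a > 0" and L: "L > 0" and C: "C \<ge> 0"
    and \<eta>: "\<eta> = min a (1 / (2 * L) * sqrt (N / T))"
  shows "C * (\<eta>\<^sup>2 * T + \<eta> * T / N + 1 / \<eta>) \<le> C * (1 / (4 * L\<^sup>2) + 1 / (2 * L) + 1 / a + 2 * L) * sqrt (T / N)"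
proof -
  have N3: "N \<le> N ^ 3"
  proof -
    have "1 \<le> N\<^sup>2" using N by (simp add: one_le_power)
    then have "N * 1 \<le> N * N\<^sup>2" using N by (intro mult_left_mono) auto
    then show ?thesis by (simp add: power3_eq_cube power2_eq_square)
  qed
  have Tp: "T > 0" using N T N3 by linarith
  define s where "s = sqrt (T / N)"
  have s2: "s\<^sup>2 = T / N" unfolding s_def using Tp N by simp
  have s1: "1 \<le> s" unfolding s_def using N T N3 by simp
  have sp: "0 < s" using s1 by simp
  have Ns: "N \<le> s"
  proof -
    have "N\<^sup>2 \<le> T / N" using N T by (simp add: field_simps power3_eq_cube power2_eq_square)
    then show ?thesis unfolding s_def by (rule real_le_rsqrt)
  qed
  have sNT: "sqrt (N / T) = 1 / s" unfolding s_def using N Tp by (simp add: real_sqrt_divide)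
  define b where "b = 1 / (2 * L * s)"
  have bp: "b > 0" unfolding b_def using L sp by simp
  have \<eta>b: "\<eta> = min a b" unfolding \<eta> b_def sNT by simp
  have ep: "\<eta> > 0" using \<eta>b a bp by simp
  have eb: "\<eta> \<le> b" using \<eta>b by simp
  have t1: "\<eta>\<^sup>2 * T \<le> s / (4 * L\<^sup>2)"
  proof -
    have "\<eta>\<^sup>2 * T \<le> b\<^sup>2 * T" using eb ep Tp by (intro mult_right_mono power_mono) auto
    also have "\<dots> = (T / s\<^sup>2) / (4 * L\<^sup>2)" unfolding b_def using L sp by (simp add: field_simps power2_eq_square)
    also have "\<dots> = N / (4 * L\<^sup>2)" unfolding s2 using N Tp by simp
    also have "\<dots> \<le> s / (4 * L\<^sup>2)" using Ns L by (intro divide_right_mono) auto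
    finally show ?thesis .
  qed
  have t2: "\<eta> * T / N \<le> s / (2 * L)"
  proof -
    have "\<eta> * T / N \<le> b * T / N" using eb Tp N by (intro divide_right_mono mult_right_mono) auto
    also have "\<dots> = (T / N) / (2 * L * s)" unfolding b_def by simp
    also have "\<dots> = s / (2 * L)" unfolding s2[symmetric] using sp L by (simp add: power2_eq_square)
    finally show ?thesis .
  qed
  have t3: "1 / \<eta> \<le> s / a + 2 * L * s"
  proof -
    have "1 / \<eta> \<le> 1 / a + 1 / b"
      using \<eta>b a bp by (cases "a \<le> b") (auto simp: min_def)
    also have "1 / a \<le> s / a" using s1 a by (simp add: divide_right_mono)
    also have "1 / b = 2 * L * s" unfolding b_def by simp
    finally show ?thesis by simp
  qed
  have "\<eta>\<^sup>2 * T + \<eta> * T / N + 1 / \<eta> \<le> (1 / (4 * L\<^sup>2) + 1 / (2 * L) + 1 / a + 2 * L) * s"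
    using t1 t2 t3 by (simp add: algebra_simps)
  then show ?thesis unfolding s_def[symmetric] using C by (simp add: mult_left_mono mult.assoc)
qed



theorem theorem1:
  fixes M :: "'w measure" and P :: "'b measure"
    and \<xi> :: "nat \<Rightarrow> nat \<Rightarrow> 'w \<Rightarrow> 'b"
    and loss :: "'b \<Rightarrow> 'a::euclidean_space \<Rightarrow> real" and g :: "'b \<Rightarrow> 'a \<Rightarrow> 'a"
    and gradF :: "'a \<Rightarrow> 'a" and xs :: 'a
    and L D \<sigma> \<rho> :: real
  assumes M: "prob_space M" and P: "prob_space P"
    and \<xi>_meas: "\<And>t i. \<xi> t i \<in> measurable M P"
    and \<xi>_distr: "\<And>t i. distr M P (\<xi> t i) = P"
    and \<xi>_indep: "prob_space.indep_vars M (\<lambda>_. P) (\<lambda>ti. \<xi> (fst ti) (snd ti)) UNIV"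
    and grad: "\<And>z x. (loss z has_derivative (\<lambda>h. g z x \<bullet> h)) (at x)"
    and convex: "\<And>z. convex_on UNIV (loss z)"
    and L_pos: "L > 0"
    and smooth: "\<And>z x y. norm (g z x - g z y) \<le> L * norm (x - y)"
    and loss_int: "\<And>x. integrable P (\<lambda>z. loss z x)"
    and g_meas: "\<And>x. (\<lambda>z. g z x) \<in> borel_measurable P"
    and D_int: "\<And>x. integrable P (\<lambda>z. (norm (g z x))\<^sup>2)"
    and D_bound: "\<And>x. (\<integral>z. (norm (g z x))\<^sup>2 \<partial>P) \<le> D"
    and gradF: "\<And>x. ((\<lambda>y. \<integral>z. loss z y \<partial>P) has_derivative (\<lambda>h. gradF x \<bullet> h)) (at x)"
    and \<sigma>_nonneg: "\<sigma> \<ge> 0"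
    and var_int: "\<And>x. integrable P (\<lambda>z. (norm (g z x - gradF x))\<^sup>2)"
    and var_bound: "\<And>x. (\<integral>z. (norm (g z x - gradF x))\<^sup>2 \<partial>P) \<le> \<sigma>\<^sup>2"
    and xs_min: "\<And>x. (\<integral>z. loss z xs \<partial>P) \<le> (\<integral>z. loss z x \<partial>P)"
    and \<rho>: "0 < \<rho>" "\<rho> < 1"
  shows "(\<exists>C. \<forall>N T W \<eta>. N \<ge> 1 \<and> T \<ge> 1 \<and> gossip_matrix N W
            \<and> spec_norm N (\<lambda>i j. W i j - 1 / real N) = \<rho>
            \<and> 0 < \<eta> \<and> \<eta> \<le> eta_max L \<rho> N T \<longrightarrow>
            expected_regret M loss g \<xi> xs W N \<eta> T
              \<le> C * (\<eta>\<^sup>2 * real T + \<eta> * real T / real N + 1 / \<eta>))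
     \<and> (\<forall>Ns :: nat \<Rightarrow> nat. \<forall>Ws :: nat \<Rightarrow> nat \<Rightarrow> nat \<Rightarrow> real.
          (\<forall>T. Ns T \<ge> 1 \<and> gossip_matrix (Ns T) (Ws T)
               \<and> spec_norm (Ns T) (\<lambda>i j. Ws T i j - 1 / real (Ns T)) = \<rho>)
          \<and> (\<lambda>T. real (Ns T)) \<in> o(\<lambda>T. real T powr (1/3)) \<longrightarrow>
          (\<lambda>T. expected_regret M loss g \<xi> xs (Ws T) (Ns T) (eta_max L \<rho> (Ns T) T) T)
            \<in> O(\<lambda>T. sqrt (real T / real (Ns T))))"
proof -
  have DS: "dsetting P loss g gradF xs L D \<sigma>"
    unfolding dsetting_def
    using P grad convex L_pos smooth loss_int g_meas D_int D_bound gradF \<sigma>_nonneg var_int var_bound xs_min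
    by blast
  interpret dsetting P loss g gradF xs L D \<sigma> by (rule DS)
  define C where "C = cstC L D \<sigma> \<rho> xs"
  have sb: "\<And>N T W \<eta>. N \<ge> 1 \<Longrightarrow> T \<ge> 1 \<Longrightarrow> gossip_matrix N W \<Longrightarrow> spec_norm N (\<lambda>i j. W i j - 1 / real N) = \<rho>
      \<Longrightarrow> 0 < \<eta> \<Longrightarrow> \<eta> \<le> eta_max L \<rho> N T \<Longrightarrow>
      0 \<le> expected_regret M loss g \<xi> xs W N \<eta> T \<and>
      expected_regret M loss g \<xi> xs W N \<eta> T \<le> C * (\<eta>\<^sup>2 * real T + \<eta> * real T / real N + 1 / \<eta>)"
    unfolding C_def by (rule single_bound[OF DS M \<xi>_meas \<xi>_distr \<xi>_indep \<rho>])
  have r: "0 < \<rho>\<^sup>2" "\<rho>\<^sup>2 < 1" using \<rho> power_strict_mono[of \<rho> 1 2] by auto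
  have C0: "0 \<le> C"
  proof -
    define c where "c = (1 + \<rho>\<^sup>2) / (1 - \<rho>\<^sup>2)"
    define q where "q = 1 - (1 + \<rho>\<^sup>2) / 2"
    have "0 \<le> \<rho>\<^sup>2" by simp
    then have p: "0 < 1 + \<rho>\<^sup>2" by linarith
    have c0: "0 < c" unfolding c_def using r p by (intro divide_pos_pos) auto
    have q0: "0 < q" unfolding q_def using r by auto
    have "0 \<le> 1 + 4 * c / q" using c0 q0 by simp
    then have "0 \<le> 2 * L * c * D * (1 + 4 * c / q) / q"
      using L_pos c0 q0 D_nonneg by (intro divide_nonneg_pos mult_nonneg_nonneg) auto
    then show ?thesis unfolding C_def cstC_def c_def[symmetric] q_def[symmetric] by simp
  qed
  define a where "a = (1 - \<rho>\<^sup>2) powr 1.5 / (32 * L * sqrt (1 + \<rho>\<^sup>2))"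
  have a0: "a > 0"
  proof -
    have "0 < 1 - \<rho>\<^sup>2" using r by simp
    then have "0 < (1 - \<rho>\<^sup>2) powr 1.5" by simp
    moreover have "0 < sqrt (1 + \<rho>\<^sup>2)" by (simp add: add_pos_nonneg)
    then have "0 < 32 * L * sqrt (1 + \<rho>\<^sup>2)" using L_pos by simp
    ultimately show ?thesis unfolding a_def by (rule divide_pos_pos)
  qed
  show ?thesis
  proof (intro conjI)
    show "\<exists>C. \<forall>N T W \<eta>. N \<ge> 1 \<and> T \<ge> 1 \<and> gossip_matrix N W
            \<and> spec_norm N (\<lambda>i j. W i j - 1 / real N) = \<rho>
            \<and> 0 < \<eta> \<and> \<eta> \<le> eta_max L \<rho> N T \<longrightarrow>
            expected_regret M loss g \<xi> xs W N \<eta> T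
              \<le> C * (\<eta>\<^sup>2 * real T + \<eta> * real T / real N + 1 / \<eta>)"
    proof (rule exI[of _ C], intro allI impI)
      fix N T W \<eta>
      assume h: "N \<ge> 1 \<and> T \<ge> 1 \<and> gossip_matrix N W \<and> spec_norm N (\<lambda>i j. W i j - 1 / real N) = \<rho>
            \<and> 0 < \<eta> \<and> \<eta> \<le> eta_max L \<rho> N T"
      then show "expected_regret M loss g \<xi> xs W N \<eta> T \<le> C * (\<eta>\<^sup>2 * real T + \<eta> * real T / real N + 1 / \<eta>)"
        using sb[of N T W \<eta>] by (elim conjE) simp
    qed
    show "\<forall>Ns :: nat \<Rightarrow> nat. \<forall>Ws :: nat \<Rightarrow> nat \<Rightarrow> nat \<Rightarrow> real.
          (\<forall>T. Ns T \<ge> 1 \<and> gossip_matrix (Ns T) (Ws T)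
               \<and> spec_norm (Ns T) (\<lambda>i j. Ws T i j - 1 / real (Ns T)) = \<rho>)
          \<and> (\<lambda>T. real (Ns T)) \<in> o(\<lambda>T. real T powr (1/3)) \<longrightarrow>
          (\<lambda>T. expected_regret M loss g \<xi> xs (Ws T) (Ns T) (eta_max L \<rho> (Ns T) T) T)
            \<in> O(\<lambda>T. sqrt (real T / real (Ns T)))"
    proof (intro allI impI)
      fix Ns :: "nat \<Rightarrow> nat" and Ws :: "nat \<Rightarrow> nat \<Rightarrow> nat \<Rightarrow> real"
      assume H: "(\<forall>T. Ns T \<ge> 1 \<and> gossip_matrix (Ns T) (Ws T)
               \<and> spec_norm (Ns T) (\<lambda>i j. Ws T i j - 1 / real (Ns T)) = \<rho>)
          \<and> (\<lambda>T. real (Ns T)) \<in> o(\<lambda>T. real T powr (1/3))"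
      define K where "K = C * (1 / (4 * L\<^sup>2) + 1 / (2 * L) + 1 / a + 2 * L)"
      have ev: "eventually (\<lambda>T. norm (real (Ns T)) \<le> 1 * norm (real T powr (1/3))) at_top"
        using H by (intro landau_o.smallD) auto
      show "(\<lambda>T. expected_regret M loss g \<xi> xs (Ws T) (Ns T) (eta_max L \<rho> (Ns T) T) T)
            \<in> O(\<lambda>T. sqrt (real T / real (Ns T)))"
      proof (rule landau_o.bigI[where c="K + 1"])
        have K0: "0 \<le> K" unfolding K_def using C0 a0 L_pos by simp
        then show "K + 1 > 0" by simp
        show "eventually (\<lambda>T. norm (expected_regret M loss g \<xi> xs (Ws T) (Ns T) (eta_max L \<rho> (Ns T) T) T)
            \<le> (K + 1) * norm (sqrt (real T / real (Ns T)))) at_top"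
          using ev eventually_ge_at_top[of "1::nat"]
        proof eventually_elim
          case (elim T)
          define N where "N = Ns T"
          have N1: "N \<ge> 1" unfolding N_def using H by auto
          have gm: "gossip_matrix N (Ws T)" "spec_norm N (\<lambda>i j. Ws T i j - 1 / real N) = \<rho>"
            unfolding N_def using H by auto
          have N3: "real N ^ 3 \<le> real T"
          proof -
            have "real N \<le> real T powr (1/3)" using elim(1) unfolding N_def by simp
            then have "real N ^ 3 \<le> (real T powr (1/3)) ^ 3" by (intro power_mono) auto
            also have "\<dots> = real T" using elim(2) by (simp add: powr_power)
            finally show ?thesis .
          qed
          define \<eta> where "\<eta> = eta_max L \<rho> N T"
          have \<eta>e: "\<eta> = min a (1 / (2 * L) * sqrt (real N / real T))"
            unfolding \<eta>_def eta_max_def a_def ..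
          have \<eta>0: "0 < \<eta>" unfolding \<eta>e using a0 L_pos N1 elim(2) by simp
          have B: "0 \<le> expected_regret M loss g \<xi> xs (Ws T) N \<eta> T \<and>
              expected_regret M loss g \<xi> xs (Ws T) N \<eta> T \<le> C * (\<eta>\<^sup>2 * real T + \<eta> * real T / real N + 1 / \<eta>)"
            using sb[OF N1 elim(2) gm \<eta>0] unfolding \<eta>_def by simp
          have A: "C * (\<eta>\<^sup>2 * real T + \<eta> * real T / real N + 1 / \<eta>) \<le> K * sqrt (real T / real N)"
            unfolding K_def using asym_arith[OF _ N3 a0 L_pos C0 \<eta>e] N1 by simp
          have "norm (expected_regret M loss g \<xi> xs (Ws T) N \<eta> T) \<le> K * sqrt (real T / real N)"
            using A B by simp
          also have "\<dots> \<le> (K + 1) * norm (sqrt (real T / real N))"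
            by (simp add: mult_right_mono)
          finally show ?case unfolding N_def \<eta>_def .
        qed
      qed
    qed
  qed
qed


end
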